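(* Let $d\ge1$ and let $\gamma\colon S^1\to\mathbb{R}^{2d}$ be a closed convex curve such that the origin lies in the interior of $\operatorname{conv}(\gamma(S^1))$, and let $\varepsilon>0$. Then there are a (sufficiently large) prime $p$, points $x_1,\dots,x_p$ in $\gamma(S^1)$, and a $\mathbb{Z}/p$-action on $\mathbb{R}^{2d}$ by homeomorphisms mapping rays from the origin to rays from the origin, free on $\mathbb{R}^{2d}\setminus\{0\}$, such that $\{x_1,\dots,x_p\}$ is an orbit of this action; moreover the $x_i$ can be chosen so that every point of $\gamma(S^1)$ is at distance at most $\varepsilon$ from some $x_i$.
   Context: A closed convex curve in $\mathbb{R}^{m}$ is a continuous embedding $\gamma\colon S^1\to\mathbb{R}^m$ such that every affine hyperplane of $\mathbb{R}^m$ meets $\gamma(S^1)$ in at most $m$ points. *)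

theory Defs
  imports "HOL-Analysis.Analysis"
begin

definition S1 :: "complex set" where
  "S1 = sphere 0 1"

text \<open>A closed convex curve in R^m (m = CARD('n)): a continuous embedding of S^1
  (continuous and injective; S^1 is compact, so this is an embedding) such that every
  affine hyperplane meets the image in at most m points.\<close>
definition closed_convex_curve :: "(complex \<Rightarrow> real^'n) \<Rightarrow> bool" where
  "closed_convex_curve \<gamma> \<longleftrightarrow>
     continuous_on S1 \<gamma> \<and> inj_on \<gamma> S1 \<and>
     (\<forall>a b. a \<noteq> 0 \<longrightarrow>
        finite (\<gamma> ` S1 \<inter> {x. a \<bullet> x = b}) \<and>
        card (\<gamma> ` S1 \<inter> {x. a \<bullet> x = b}) \<le> CARD('n))"

definition ray :: "'a::real_vector \<Rightarrow> 'a set" where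
  "ray x = {t *\<^sub>R x | t. t \<ge> 0}"

definition maps_rays :: "('a::real_vector \<Rightarrow> 'a) \<Rightarrow> bool" where
  "maps_rays f \<longleftrightarrow> (\<forall>x. x \<noteq> 0 \<longrightarrow> (\<exists>y. y \<noteq> 0 \<and> f ` ray x = ray y))"

text \<open>A Z/p-action on the space, given by the image g of the generator 1 (the element
  k mod p acts by g^^k): g^^p = id.\<close>
definition Zp_ray_action :: "nat \<Rightarrow> ('a::real_normed_vector \<Rightarrow> 'a) \<Rightarrow> bool" where
  "Zp_ray_action p g \<longleftrightarrow>
     (g ^^ p = id) \<and>
     (\<forall>k<p. (\<exists>h. homeomorphism UNIV UNIV (g ^^ k) h) \<and> maps_rays (g ^^ k)) \<and>
     (\<forall>k. 0 < k \<and> k < p \<longrightarrow> (\<forall>x. x \<noteq> 0 \<longrightarrow> (g ^^ k) x \<noteq> x))"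

end

theory Submission
  imports Defs "HOL-Computational_Algebra.Primes"
begin

definition pos_hom :: "('a::real_vector \<Rightarrow> 'a) \<Rightarrow> bool" where
  "pos_hom f \<longleftrightarrow> (\<forall>t x. t \<ge> 0 \<longrightarrow> f (t *\<^sub>R x) = t *\<^sub>R f x)"

definition RH :: "('a::real_normed_vector \<Rightarrow> 'a) \<Rightarrow> ('a \<Rightarrow> 'a) \<Rightarrow> bool" where
  "RH f f' \<longleftrightarrow> homeomorphism UNIV UNIV f f' \<and> pos_hom f"

definition good_base :: "nat \<Rightarrow> ('a::real_normed_vector \<Rightarrow> 'a) \<Rightarrow> bool" where
  "good_base p R \<longleftrightarrow> R ^^ p = id \<and> (\<forall>k. \<exists>h. RH (R ^^ k) h) \<and>
     (\<forall>k. 0 < k \<and> k < p \<longrightarrow> (\<forall>x. x \<noteq> 0 \<longrightarrow> (R ^^ k) x \<noteq> x))"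

lemma pos_hom_0: assumes "pos_hom f" shows "f 0 = 0"
proof -
  have "f (0 *\<^sub>R 0) = 0 *\<^sub>R f 0" using assms unfolding pos_hom_def by blast
  then show ?thesis by simp
qed

lemma RH_inv: assumes "RH f f'" shows "RH f' f"
proof -
  have h: "homeomorphism UNIV UNIV f f'" and p: "pos_hom f" using assms by (auto simp: RH_def)
  have fi: "\<And>x. f' (f x) = x" "\<And>y. f (f' y) = y" using h by (auto simp: homeomorphism_def)
  have "pos_hom f'"
    unfolding pos_hom_def
  proof (intro allI impI)
    fix t :: real and y assume "t \<ge> 0"
    have "f (t *\<^sub>R f' y) = t *\<^sub>R f (f' y)" using p \<open>t \<ge> 0\<close> unfolding pos_hom_def by blast
    then have "f' (f (t *\<^sub>R f' y)) = f' (t *\<^sub>R y)" by (simp add: fi)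
    then show "f' (t *\<^sub>R y) = t *\<^sub>R f' y" by (simp add: fi)
  qed
  then show ?thesis using homeomorphism_symD[OF h] by (simp add: RH_def)
qed

lemma RH_comp: assumes "RH f f'" "RH g g'" shows "RH (f \<circ> g) (g' \<circ> f')"
proof -
  have "homeomorphism UNIV UNIV (f \<circ> g) (g' \<circ> f')"
    using assms homeomorphism_compose unfolding RH_def by blast
  moreover have "pos_hom (f \<circ> g)" using assms by (simp add: RH_def pos_hom_def)
  ultimately show ?thesis by (simp add: RH_def)
qed

lemma RH_id: "RH id id"
  by (simp add: RH_def pos_hom_def homeomorphism_def)

lemma RH_maps_rays: assumes "RH f f'" shows "maps_rays f"
proof -
  have h: "homeomorphism UNIV UNIV f f'" and p: "pos_hom f" using assms by (auto simp: RH_def)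
  have fi: "\<And>x. f' (f x) = x" using h by (auto simp: homeomorphism_def)
  have f0: "f 0 = 0" using p pos_hom_0 by blast
  show ?thesis unfolding maps_rays_def
  proof (intro allI impI)
    fix x :: 'a assume "x \<noteq> 0"
    have "f x \<noteq> 0"
    proof
      assume "f x = 0" then have "f' (f x) = f' (f 0)" using f0 by simp
      then show False using fi \<open>x \<noteq> 0\<close> by simp
    qed
    moreover have "f ` ray x = ray (f x)"
    proof -
      have "f ` {t *\<^sub>R x |t. 0 \<le> t} = (\<lambda>t. f (t *\<^sub>R x)) ` {t. 0 \<le> t}" by auto
      also have "\<dots> = (\<lambda>t. t *\<^sub>R f x) ` {t. 0 \<le> t}"
        using p unfolding pos_hom_def by (intro image_cong) auto
      finally show ?thesis unfolding ray_def by auto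
    qed
    ultimately show "\<exists>y. y \<noteq> 0 \<and> f ` ray x = ray y" by blast
  qed
qed

lemma conj_pow:
  assumes "\<And>x. f' (f x) = x" "\<And>x. f (f' x) = x"
  shows "(f \<circ> R \<circ> f') ^^ k = f \<circ> (R ^^ k) \<circ> f'"
proof (induction k)
  case 0 then show ?case using assms by (auto simp: fun_eq_iff)
next
  case (Suc k) then show ?case using assms by (auto simp: fun_eq_iff)
qed

lemma good_base_conj:
  assumes "good_base p R" "RH f f'"
  shows "good_base p (f \<circ> R \<circ> f')"
proof -
  have h: "homeomorphism UNIV UNIV f f'" and p: "pos_hom f" using assms by (auto simp: RH_def)
  have fi: "\<And>x. f' (f x) = x" "\<And>y. f (f' y) = y" using h by (auto simp: homeomorphism_def)
  have pw: "\<And>k. (f \<circ> R \<circ> f') ^^ k = f \<circ> (R ^^ k) \<circ> f'" using conj_pow fi by blast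
  have f0: "f 0 = 0" using p pos_hom_0 by blast
  have 1: "(f \<circ> R \<circ> f') ^^ p = id" using assms(1) fi by (simp add: pw good_base_def fun_eq_iff)
  have 2: "\<exists>h. RH ((f \<circ> R \<circ> f') ^^ k) h" for k
  proof -
    have "\<exists>h. RH (R ^^ k) h" using assms(1) unfolding good_base_def by simp
    then obtain h where hh: "RH (R ^^ k) h" by blast
    have "RH (f \<circ> (R ^^ k)) (h \<circ> f')"
      using RH_comp[OF assms(2) hh] .
    then have "RH ((f \<circ> (R ^^ k)) \<circ> f') (f \<circ> (h \<circ> f'))"
      using RH_comp[OF _ RH_inv[OF assms(2)]] by blast
    then show ?thesis unfolding pw by blast
  qed
  have 3: "((f \<circ> R \<circ> f') ^^ k) x \<noteq> x" if "0 < k" "k < p" "x \<noteq> 0" for k x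
  proof
    assume "((f \<circ> R \<circ> f') ^^ k) x = x"
    then have "f ((R ^^ k) (f' x)) = f (f' x)" by (simp add: pw fi)
    then have "f' (f ((R ^^ k) (f' x))) = f' (f (f' x))" by simp
    then have "(R ^^ k) (f' x) = f' x" by (simp only: fi)
    moreover have "f' x \<noteq> 0"
    proof
      assume "f' x = 0" then have "f (f' x) = 0" using f0 by simp
      then show False using fi \<open>x \<noteq> 0\<close> by simp
    qed
    moreover have "\<forall>x. x \<noteq> 0 \<longrightarrow> (R ^^ k) x \<noteq> x" using assms(1) that unfolding good_base_def by simp
    ultimately show False by simp
  qed
  have 4: "\<forall>k. 0 < k \<and> k < p \<longrightarrow> (\<forall>x. x \<noteq> 0 \<longrightarrow> ((f \<circ> R \<circ> f') ^^ k) x \<noteq> x)"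
    using 3 by blast
  have 5: "\<forall>k. \<exists>h. RH ((f \<circ> R \<circ> f') ^^ k) h" using 2 by blast
  show ?thesis unfolding good_base_def using 1 5 4 by (rule conjI[OF _ conjI])
qed

lemma good_base_Zp: assumes "good_base p R" shows "Zp_ray_action p R"
proof -
  have a: "\<forall>k<p. (\<exists>h. homeomorphism UNIV UNIV (R ^^ k) h) \<and> maps_rays (R ^^ k)"
  proof (intro allI impI)
    fix k :: nat
    show "(\<exists>h. homeomorphism UNIV UNIV (R ^^ k) h) \<and> maps_rays (R ^^ k)" 
  proof -
    have "\<exists>h. RH (R ^^ k) h" using assms unfolding good_base_def by simp
    then obtain h where "RH (R ^^ k) h" by blast
    then show "(\<exists>h. homeomorphism UNIV UNIV (R ^^ k) h) \<and> maps_rays (R ^^ k)" using RH_maps_rays unfolding RH_def by blast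
  qed
  qed
  have b: "R ^^ p = id" and c: "\<forall>k. 0 < k \<and> k < p \<longrightarrow> (\<forall>x. x \<noteq> 0 \<longrightarrow> (R ^^ k) x \<noteq> x)"
    using assms unfolding good_base_def by simp_all
  show ?thesis unfolding Zp_ray_action_def using b a c by (rule conjI[OF _ conjI])
qed

lemma homeo_UNIV_I:
  assumes "continuous_on UNIV f" "continuous_on UNIV g" "\<And>x. g (f x) = x" "\<And>y. f (g y) = y"
  shows "homeomorphism UNIV UNIV f g"
proof -
  have "surj f" by (metis assms(4) surjI)
  moreover have "surj g" by (metis assms(3) surjI)
  ultimately show ?thesis unfolding homeomorphism_def using assms by simp
qed

definition cone :: "('a::real_normed_vector \<Rightarrow> 'a) \<Rightarrow> 'a \<Rightarrow> 'a" where
  "cone H x = norm x *\<^sub>R H (sgn x)"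

definition scal :: "('a::real_normed_vector \<Rightarrow> real) \<Rightarrow> 'a \<Rightarrow> 'a" where
  "scal \<rho> x = \<rho> (sgn x) *\<^sub>R x"

lemma sgn_pos_scale:
  fixes x :: "'a::real_normed_vector"
  shows "(t::real) > 0 \<Longrightarrow> sgn (t *\<^sub>R x) = sgn x"
  by (simp add: sgn_scaleR)

lemma cone_inv:
  assumes H: "homeomorphism (sphere 0 1) (sphere 0 1) H H'"
  shows "cone H' (cone H x) = x" and "norm (cone H x) = norm x"
proof -
  have Hs: "\<And>w. w \<in> sphere 0 1 \<Longrightarrow> H w \<in> sphere 0 1" and HH: "\<And>w. w \<in> sphere 0 1 \<Longrightarrow> H' (H w) = w"
    using H unfolding homeomorphism_def by auto
  show "norm (cone H x) = norm x"
  proof (cases "x = 0")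
    case True then show ?thesis by (simp add: cone_def)
  next
    case False
    then have "sgn x \<in> sphere 0 1" by (simp add: norm_sgn)
    then have "norm (H (sgn x)) = 1" using Hs by simp
    then show ?thesis by (simp add: cone_def)
  qed
  show "cone H' (cone H x) = x"
  proof (cases "x = 0")
    case True then show ?thesis by (simp add: cone_def)
  next
    case False
    then have sx: "sgn x \<in> sphere 0 1" by (simp add: norm_sgn)
    then have n1: "norm (H (sgn x)) = 1" using Hs by simp
    then have hne: "H (sgn x) \<noteq> 0" by auto
    have nx: "norm x > 0" using False by simp
    have "sgn (cone H x) = sgn (H (sgn x))" unfolding cone_def using nx by (simp add: sgn_pos_scale)
    also have "\<dots> = H (sgn x)" using n1 by (simp add: sgn_div_norm)
    finally have "cone H' (cone H x) = norm x *\<^sub>R H' (H (sgn x))"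
      unfolding cone_def[of H'] using \<open>norm (cone H x) = norm x\<close> by simp
    also have "\<dots> = norm x *\<^sub>R sgn x" using HH sx by simp
    also have "\<dots> = x" using False by (simp add: sgn_div_norm)
    finally show ?thesis .
  qed
qed

lemma cone_cont:
  assumes H: "homeomorphism (sphere 0 1) (sphere 0 1) H H'"
  shows "continuous_on UNIV (cone H)"
proof -
  have cH: "continuous_on (sphere 0 1) H" and Hs: "H ` sphere 0 1 \<subseteq> sphere 0 1"
    using H unfolding homeomorphism_def by auto
  have c1: "continuous_on (- {0}) (cone H)"
  proof -
    have "continuous_on (- {0}) (\<lambda>x::'a. sgn x)"
      by (intro continuous_intros) auto
    moreover have "sgn ` (- {0::'a}) \<subseteq> sphere 0 1" by (auto simp: norm_sgn split: if_splits)
    ultimately have "continuous_on (- {0}) (\<lambda>x::'a. H (sgn x))"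
      using continuous_on_compose2[OF cH] by blast
    then show ?thesis unfolding cone_def by (intro continuous_intros) auto
  qed
  have "isCont (cone H) x" for x
  proof (cases "x = 0")
    case False
    then show ?thesis using c1 continuous_on_eq_continuous_at[of "- {0}" "cone H"] by auto
  next
    case True
    have "((\<lambda>y. norm (cone H y)) \<longlongrightarrow> 0) (at 0)"
      using cone_inv(2)[OF H] by (simp add: tendsto_norm_zero)
    then have "(cone H \<longlongrightarrow> 0) (at 0)" using tendsto_norm_zero_iff by blast
    moreover have "cone H 0 = 0" by (simp add: cone_def)
    ultimately show ?thesis using True by (simp add: isCont_def)
  qed
  then show ?thesis by (simp add: continuous_at_imp_continuous_on)
qed

lemma RH_cone:
  assumes H: "homeomorphism (sphere 0 1) (sphere 0 1) H H'"
  shows "RH (cone H) (cone H')"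
proof -
  have H': "homeomorphism (sphere 0 1) (sphere 0 1) H' H" using homeomorphism_symD[OF H] .
  have "homeomorphism UNIV UNIV (cone H) (cone H')"
    by (rule homeo_UNIV_I[OF cone_cont[OF H] cone_cont[OF H'] cone_inv(1)[OF H] cone_inv(1)[OF H']])
  moreover have "pos_hom (cone H)"
    unfolding pos_hom_def
  proof (intro allI impI)
    fix t :: real and x :: 'a assume "t \<ge> 0"
    show "cone H (t *\<^sub>R x) = t *\<^sub>R cone H x"
    proof (cases "t = 0")
      case True then show ?thesis by (simp add: cone_def)
    next
      case False
      then have "t > 0" using \<open>t \<ge> 0\<close> by simp
      then show ?thesis by (simp add: cone_def sgn_pos_scale)
    qed
  qed
  ultimately show ?thesis by (simp add: RH_def)
qed

lemma scal_cont:
  fixes \<rho> :: "'a::euclidean_space \<Rightarrow> real"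
  assumes c: "continuous_on UNIV \<rho>" and pos: "\<And>w. \<rho> w > 0"
  shows "continuous_on UNIV (scal \<rho>)"
proof -
  have c1: "continuous_on (- {0}) (scal \<rho>)"
  proof -
    have "continuous_on (- {0}) (\<lambda>x::'a. sgn x)"
      by (intro continuous_intros) auto
    then have "continuous_on (- {0}) (\<lambda>x::'a. \<rho> (sgn x))"
      using continuous_on_compose2[OF c] by blast
    then show ?thesis unfolding scal_def by (intro continuous_intros) auto
  qed
  obtain B where B: "\<And>w. w \<in> cball (0::'a) 1 \<Longrightarrow> norm (\<rho> w) \<le> B"
  proof -
    have "compact (\<rho> ` cball (0::'a) 1)"
      by (rule compact_continuous_image) (auto intro: continuous_on_subset[OF c] compact_cball)
    then have "bounded (\<rho> ` cball (0::'a) 1)" by (rule compact_imp_bounded)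
    then obtain a where "\<forall>x\<in>cball (0::'a) 1. \<bar>\<rho> x\<bar> \<le> a" unfolding bounded_iff by auto
    then show ?thesis using that[of a] by auto
  qed
  have "isCont (scal \<rho>) x" for x
  proof (cases "x = 0")
    case False
    then show ?thesis using c1 continuous_on_eq_continuous_at[of "- {0}" "scal \<rho>"] by auto
  next
    case True
    have "norm (scal \<rho> y) \<le> B * norm y" for y
    proof -
      have "sgn y \<in> cball 0 1" by (auto simp: norm_sgn)
      then have "\<bar>\<rho> (sgn y)\<bar> \<le> B" using B by auto
      then have "\<bar>\<rho> (sgn y)\<bar> * norm y \<le> B * norm y" by (rule mult_right_mono) simp
      then show ?thesis unfolding scal_def by simp
    qed
    then have ev: "eventually (\<lambda>y. norm (scal \<rho> y) \<le> B * norm y) (at (0::'a))"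
      by (simp add: always_eventually)
    have nz: "((\<lambda>y. norm y) \<longlongrightarrow> 0) (at (0::'a))"
      by (rule tendsto_norm_zero[OF tendsto_ident_at])
    have "((\<lambda>y. B * norm y) \<longlongrightarrow> 0) (at (0::'a))"
      using tendsto_mult[OF tendsto_const[of B] nz] by simp
    then have "(scal \<rho> \<longlongrightarrow> 0) (at 0)"
      by (rule Lim_null_comparison[OF ev])
    moreover have "scal \<rho> 0 = 0" by (simp add: scal_def)
    ultimately show ?thesis using True unfolding isCont_def by simp
  qed
  then show ?thesis by (simp add: continuous_at_imp_continuous_on)
qed

lemma scal_inv:
  assumes pos: "\<And>w. \<rho> w > 0"
  shows "scal (\<lambda>w. inverse (\<rho> w)) (scal \<rho> x) = x"
proof (cases "x = 0")
  case True then show ?thesis by (simp add: scal_def)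
next
  case False
  have "sgn (scal \<rho> x) = sgn x" unfolding scal_def using pos by (simp add: sgn_pos_scale)
  then show ?thesis unfolding scal_def[of "\<lambda>w. inverse (\<rho> w)"] 
    using pos[of "sgn x"] by (simp add: scal_def)
qed

lemma RH_scal:
  fixes \<rho> :: "'a::euclidean_space \<Rightarrow> real"
  assumes c: "continuous_on UNIV \<rho>" and pos: "\<And>w. \<rho> w > 0"
  shows "RH (scal \<rho>) (scal (\<lambda>w. inverse (\<rho> w)))"
proof -
  have c': "continuous_on UNIV (\<lambda>w. inverse (\<rho> w))"
  proof -
    have "\<And>w. \<rho> w \<noteq> 0" using pos by (metis less_irrefl)
    then show ?thesis using c by (intro continuous_intros) auto
  qed
  have pos': "\<And>w. inverse (\<rho> w) > 0" using pos by simp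
  have i1: "\<And>x. scal (\<lambda>w. inverse (\<rho> w)) (scal \<rho> x) = x" using scal_inv pos by blast
  have i2: "\<And>x. scal \<rho> (scal (\<lambda>w. inverse (\<rho> w)) x) = x"
    using scal_inv[of "\<lambda>w. inverse (\<rho> w)"] pos' by simp
  have "homeomorphism UNIV UNIV (scal \<rho>) (scal (\<lambda>w. inverse (\<rho> w)))"
    by (rule homeo_UNIV_I[OF scal_cont[OF c pos] scal_cont[OF c' pos'] i1 i2])
  moreover have "pos_hom (scal \<rho>)"
    unfolding pos_hom_def
  proof (intro allI impI)
    fix t :: real and x :: 'a assume "t \<ge> 0"
    show "scal \<rho> (t *\<^sub>R x) = t *\<^sub>R scal \<rho> x"
    proof (cases "t = 0")
      case True then show ?thesis by (simp add: scal_def)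
    next
      case False
      then have "t > 0" using \<open>t \<ge> 0\<close> by simp
      then show ?thesis by (simp add: scal_def sgn_pos_scale)
    qed
  qed
  ultimately show ?thesis by (simp add: RH_def)
qed

lemma interp_pos:
  fixes W :: "'a::real_normed_vector set" and c :: "'a \<Rightarrow> real"
  assumes fin: "finite W" and cpos: "\<And>w. w \<in> W \<Longrightarrow> c w > 0"
  obtains \<rho> where "continuous_on UNIV \<rho>" "\<And>v. \<rho> v > 0" "\<And>w. w \<in> W \<Longrightarrow> \<rho> w = c w"
proof -
  define D where "D = (\<lambda>(w, w'). dist w w') ` {(w, w'). w \<in> W \<and> w' \<in> W \<and> w \<noteq> w'}"
  have "finite {(w, w'). w \<in> W \<and> w' \<in> W \<and> w \<noteq> w'}"
    by (rule finite_subset[of _ "W \<times> W"]) (use fin in auto)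
  then have fD: "finite D" unfolding D_def by simp
  define \<delta> where "\<delta> = Min (insert 1 D)"
  have Dpos: "\<forall>x\<in>insert 1 D. x > 0" unfolding D_def by auto
  have \<delta>pos: "\<delta> > 0" unfolding \<delta>_def using fD Dpos by (subst Min_gr_iff) auto
  have \<delta>le: "\<delta> \<le> dist w w'" if "w \<in> W" "w' \<in> W" "w \<noteq> w'" for w w'
  proof -
    have "dist w w' \<in> D" unfolding D_def using that by force
    then show ?thesis unfolding \<delta>_def using fD by (intro Min_le) auto
  qed
  define \<phi> where "\<phi> = (\<lambda>(w::'a) v. max 0 (1 - dist v w / \<delta>))"
  define \<rho> where "\<rho> = (\<lambda>v. exp (\<Sum>w\<in>W. \<phi> w v * ln (c w)))"
  have "continuous_on UNIV \<rho>"
    unfolding \<rho>_def \<phi>_def using \<delta>pos by (intro continuous_intros) auto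
  moreover have "\<And>v. \<rho> v > 0" unfolding \<rho>_def by simp
  moreover have "\<rho> w = c w" if w: "w \<in> W" for w
  proof -
    have z: "\<phi> w' w = 0" if "w' \<in> W - {w}" for w'
    proof -
      have "\<delta> \<le> dist w w'" using \<delta>le[of w w'] that w by auto
      then have "dist w w' / \<delta> \<ge> 1" using \<delta>pos by simp
      then show ?thesis unfolding \<phi>_def by simp
    qed
    have "(\<Sum>w'\<in>W. \<phi> w' w * ln (c w')) = \<phi> w w * ln (c w) + (\<Sum>w'\<in>W - {w}. \<phi> w' w * ln (c w'))"
      using fin w by (rule sum.remove)
    also have "(\<Sum>w'\<in>W - {w}. \<phi> w' w * ln (c w')) = 0"
      using z by simp
    also have "\<phi> w w = 1" unfolding \<phi>_def by simp
    finally show ?thesis unfolding \<rho>_def using cpos[OF w] by simp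
  qed
  ultimately show ?thesis using that by blast
qed

lemma sgn_eq_imp_eq:
  fixes x y :: "'a::real_normed_vector"
  shows "sgn x = sgn y \<Longrightarrow> norm x = norm y \<Longrightarrow> x = y"
  by (metis sgn_div_norm div_by_0 norm_eq_zero scaleR_zero_left scale_eq_0_iff divideR_right zero_less_norm_iff)

lemma core_from_sphere:
  fixes R :: "'a::euclidean_space \<Rightarrow> 'a" and Y :: "'a set"
  assumes gb: "good_base p R" and H: "homeomorphism (sphere 0 1) (sphere 0 1) H H'"
    and un: "\<And>k. k < p \<Longrightarrow> norm ((R ^^ k) u) = 1"
    and img: "(\<lambda>k. H ((R ^^ k) u)) ` {..<p} = sgn ` Y"
    and fin: "finite Y" and Y0: "0 \<notin> Y" and inj: "inj_on sgn Y" and p0: "p > 0"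
  shows "\<exists>g y0. good_base p g \<and> y0 \<in> Y \<and> {(g ^^ k) y0 | k. k < p} = Y"
proof -
  define c where "c = (\<lambda>w. norm (inv_into Y sgn w))"
  have cpos: "c w > 0" if wY: "w \<in> sgn ` Y" for w
  proof -
    obtain y where y: "y \<in> Y" "w = sgn y" using wY by blast
    then have "inv_into Y sgn w = y" using inj by (simp add: inv_into_f_f)
    then show ?thesis using y Y0 unfolding c_def by auto
  qed
  obtain \<rho> where \<rho>c: "continuous_on UNIV \<rho>" and \<rho>p: "\<And>v. \<rho> v > 0"
    and \<rho>i: "\<And>w. w \<in> sgn ` Y \<Longrightarrow> \<rho> w = c w"
    using interp_pos[of "sgn ` Y" c] fin cpos by blast
  define \<Phi> where "\<Phi> = scal \<rho> \<circ> cone H"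
  define \<Phi>' where "\<Phi>' = cone H' \<circ> scal (\<lambda>w. inverse (\<rho> w))"
  have RHP: "RH \<Phi> \<Phi>'" unfolding \<Phi>_def \<Phi>'_def
    by (rule RH_comp[OF RH_scal[OF \<rho>c \<rho>p] RH_cone[OF H]])
  have fi: "\<And>x. \<Phi>' (\<Phi> x) = x" "\<And>y. \<Phi> (\<Phi>' y) = y"
    using RHP unfolding RH_def homeomorphism_def by auto
  define g where "g = \<Phi> \<circ> R \<circ> \<Phi>'"
  have gb': "good_base p g" unfolding g_def by (rule good_base_conj[OF gb RHP])
  have gk: "(g ^^ k) (\<Phi> u) = \<Phi> ((R ^^ k) u)" for k
    unfolding g_def conj_pow[of \<Phi>' \<Phi>, OF fi] by (simp add: fi)
  have keyval: "\<Phi> ((R ^^ k) u) = inv_into Y sgn (H ((R ^^ k) u))" if "k < p" for k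
  proof -
    let ?v = "(R ^^ k) u"
    have "H ?v \<in> sgn ` Y" using img that by blast
    then obtain y where y: "y \<in> Y" "H ?v = sgn y" by blast
    have iy: "inv_into Y sgn (H ?v) = y" using y inj by (simp add: inv_into_f_f)
    have n1: "norm ?v = 1" using un that by simp
    then have "sgn ?v = ?v" by (simp add: sgn_div_norm)
    then have "cone H ?v = sgn y" unfolding cone_def using n1 y by simp
    then have "\<Phi> ?v = \<rho> (sgn (sgn y)) *\<^sub>R sgn y" unfolding \<Phi>_def scal_def by simp
    also have "sgn (sgn y) = sgn y" using y Y0 by (auto simp: sgn_div_norm norm_sgn)
    also have "\<rho> (sgn y) = norm y" using \<rho>i[of "sgn y"] y iy unfolding c_def by auto
    also have "norm y *\<^sub>R sgn y = y"
    proof -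
      have "y \<noteq> 0" using y Y0 by auto
      then show ?thesis by (simp add: sgn_div_norm)
    qed
    finally show ?thesis using iy by simp
  qed
  have orb: "{(g ^^ k) (\<Phi> u) | k. k < p} = Y"
  proof
    show "{(g ^^ k) (\<Phi> u) | k. k < p} \<subseteq> Y"
    proof safe
      fix k assume "k < p"
      have "H ((R ^^ k) u) \<in> sgn ` Y" using img \<open>k < p\<close> by blast
      then have "inv_into Y sgn (H ((R ^^ k) u)) \<in> Y" by (auto intro: inv_into_into)
      then show "(g ^^ k) (\<Phi> u) \<in> Y" using gk keyval \<open>k < p\<close> by simp
    qed
    show "Y \<subseteq> {(g ^^ k) (\<Phi> u) | k. k < p}"
    proof
      fix y assume y: "y \<in> Y"
      then have "sgn y \<in> (\<lambda>k. H ((R ^^ k) u)) ` {..<p}" using img by blast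
      then obtain k where k: "k < p" "H ((R ^^ k) u) = sgn y" by auto
      have "(g ^^ k) (\<Phi> u) = y" using gk keyval[OF k(1)] k(2) y inj by (simp add: inv_into_f_f)
      then show "y \<in> {(g ^^ k) (\<Phi> u) | k. k < p}" using k(1) by blast
    qed
  qed
  have "\<Phi> u \<in> Y"
  proof -
    have "(g ^^ 0) (\<Phi> u) \<in> {(g ^^ k) (\<Phi> u) | k. k < p}" using p0 by blast
    then show ?thesis using orb by simp
  qed
  then show ?thesis using gb' orb by blast
qed

lemma infinite_unit_sphere:
  assumes "2 \<le> DIM('a::euclidean_space)"
  shows "infinite (sphere (0::'a) 1)"
proof
  assume fin: "finite (sphere (0::'a) 1)"
  obtain e :: 'a where e: "e \<in> Basis" using nonempty_Basis by blast
  have m: "e \<in> sphere 0 1" "-e \<in> sphere 0 1" using e by auto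
  have ne: "e \<noteq> -e"
  proof
    assume "e = -e"
    then have "e + e = 0" by (metis add.right_inverse)
    then have "2 *\<^sub>R e = 0" by (simp add: scaleR_2)
    then show False using e nonzero_Basis by auto
  qed
  have "connected (sphere (0::'a) 1)" using connected_sphere assms by blast
  then have "sphere (0::'a) 1 = {} \<or> (\<exists>a. sphere (0::'a) 1 = {a})"
    using fin connected_finite_iff_sing by blast
  then show False
  proof
    assume "sphere (0::'a) 1 = {}" then show False using m by auto
  next
    assume "\<exists>a. sphere (0::'a) 1 = {a}"
    then obtain a where "sphere (0::'a) 1 = {a}" by blast
    then have "e = a" "-e = a" using m by blast+
    then show False using ne by simp
  qed
qed

lemma ext_punct_cont:
  fixes f :: "'a::euclidean_space \<Rightarrow> 'a"
  assumes hf: "homeomorphism (S - {c}) T f f'" and hF: "homeomorphism T T F F'"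
    and cT: "closed T" and DT: "D \<subseteq> T" and bD: "bounded D" and FD: "\<And>x. x \<in> T - D \<Longrightarrow> F x = x"
    and cS: "c \<in> S"
  shows "continuous_on S (\<lambda>x. if x = c then c else f' (F (f x)))"
proof -
  let ?H = "\<lambda>x. if x = c then c else f' (F (f x))"
  have fT: "\<And>x. x \<in> S - {c} \<Longrightarrow> f x \<in> T" using homeomorphism_image1[OF hf] by blast
  have f'S: "\<And>y. y \<in> T \<Longrightarrow> f' y \<in> S - {c}" using homeomorphism_image2[OF hf] by blast
  have ff: "\<And>x. x \<in> S - {c} \<Longrightarrow> f' (f x) = x" using homeomorphism_apply1[OF hf] by blast
  have cf: "continuous_on (S - {c}) f" using homeomorphism_cont1[OF hf] .
  have cf': "continuous_on T f'" using homeomorphism_cont2[OF hf] .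
  have FT: "\<And>y. y \<in> T \<Longrightarrow> F y \<in> T" using homeomorphism_image1[OF hF] by blast
  have cF: "continuous_on T F" using homeomorphism_cont1[OF hF] .
  have c1: "continuous_on (S - {c}) ?H"
  proof -
    have "continuous_on (S - {c}) (\<lambda>x. f' (F (f x)))"
      by (intro continuous_on_compose2[OF cf'] continuous_on_compose2[OF cF] cf) (use fT FT in auto)
    then show ?thesis by (rule continuous_on_eq) auto
  qed
  define K where "K = f' ` closure D"
  have clD: "closure D \<subseteq> T" using DT cT closure_minimal by blast
  have "compact (closure D)" using bD by (simp add: compact_closure)
  then have "compact K" unfolding K_def
    by (rule compact_continuous_image[OF continuous_on_subset[OF cf' clD]])
  then have clK: "closed K" by (rule compact_imp_closed)
  have cK: "c \<notin> K" unfolding K_def using clD f'S by auto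
  have c2: "continuous_on (S - K) ?H"
  proof -
    have "?H x = x" if "x \<in> S - K" for x
    proof (cases "x = c")
      case False
      then have xs: "x \<in> S - {c}" using that by auto
      have "f x \<notin> D"
      proof
        assume "f x \<in> D"
        then have "f' (f x) \<in> K" unfolding K_def using closure_subset by blast
        then show False using ff[OF xs] that by auto
      qed
      then have "F (f x) = f x" using FD fT[OF xs] by auto
      then show ?thesis using False ff[OF xs] by simp
    qed simp
    then have "\<And>x. x \<in> S - K \<Longrightarrow> x = ?H x" by simp
    then show ?thesis by (rule continuous_on_eq[OF continuous_on_id])
  qed
  have U: "(S - {c}) \<union> (S - K) = S" using cK cS by auto
  have o1: "openin (top_of_set S) (S - {c})" by (rule openin_delete) simp
  have o2: "openin (top_of_set S) (S - K)"
  proof -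
    have "openin (top_of_set S) (S \<inter> (- K))" using clK by (intro openin_open_Int) auto
    moreover have "S \<inter> (- K) = S - K" by auto
    ultimately show ?thesis by simp
  qed
  have "continuous_on ((S - {c}) \<union> (S - K)) ?H"
    using continuous_on_Un_local_open[OF _ _ c1 c2] o1 o2 U by simp
  then show ?thesis using U by simp
qed

lemma sphere_moving:
  fixes a b :: "nat \<Rightarrow> 'a::euclidean_space"
  assumes dim: "3 \<le> DIM('a)" and ab: "\<And>k. k < p \<Longrightarrow> a k \<in> sphere 0 1 \<and> b k \<in> sphere 0 1"
    and ia: "inj_on a {..<p}" and ib: "inj_on b {..<p}"
  obtains H H' where "homeomorphism (sphere 0 1) (sphere 0 1) H H'" "\<And>k. k < p \<Longrightarrow> H (a k) = b k"
proof -
  let ?S = "sphere (0::'a) 1"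
  have "infinite ?S" by (rule infinite_unit_sphere) (use dim in simp)
  then have "infinite (?S - (a ` {..<p} \<union> b ` {..<p}))" by (simp add: infinite_remove Diff_infinite_finite)
  then have "?S - (a ` {..<p} \<union> b ` {..<p}) \<noteq> {}" by (metis finite.emptyI)
  then obtain c where c: "c \<in> ?S" "c \<notin> a ` {..<p}" "c \<notin> b ` {..<p}" by blast
  obtain e :: 'a where e: "e \<in> Basis" using nonempty_Basis by blast
  then have e0: "e \<noteq> 0" by (auto simp: nonzero_Basis)
  define T where "T = {x::'a. e \<bullet> x = 0}"
  have "(?S - {c}) homeomorphic T" unfolding T_def
    by (rule homeomorphic_punctured_sphere_hyperplane) (use c e0 in auto)
  then obtain f f' where hf: "homeomorphism (?S - {c}) T f f'" unfolding homeomorphic_def by blast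
  have affT: "affine T" unfolding T_def by (rule affine_hyperplane)
  have ahT: "affine hull T = T" using affT by (simp add: hull_same)
  have adT: "2 \<le> aff_dim T" unfolding T_def using e0 dim by simp
  have conT: "connected T" unfolding T_def by (rule convex_connected[OF convex_hyperplane])
  have clT: "closed T" unfolding T_def by (rule closed_hyperplane)
  have fT: "\<And>x. x \<in> ?S - {c} \<Longrightarrow> f x \<in> T" using homeomorphism_image1[OF hf] by blast
  have f'S: "\<And>y. y \<in> T \<Longrightarrow> f' y \<in> ?S - {c}" using homeomorphism_image2[OF hf] by blast
  have ff: "\<And>x. x \<in> ?S - {c} \<Longrightarrow> f' (f x) = x" using homeomorphism_apply1[OF hf] by blast
  have ff': "\<And>y. y \<in> T \<Longrightarrow> f (f' y) = y" using homeomorphism_apply2[OF hf] by blast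
  have ac: "\<And>k. k < p \<Longrightarrow> a k \<in> ?S - {c}" and bc: "\<And>k. k < p \<Longrightarrow> b k \<in> ?S - {c}"
    using ab c by auto
  have "\<exists>F F'. homeomorphism T T F F' \<and> (\<forall>i \<in> {..<p}. F ((f \<circ> a) i) = (f \<circ> b) i) \<and>
               {x. \<not> (F x = x \<and> F' x = x)} \<subseteq> T \<and> bounded {x. \<not> (F x = x \<and> F' x = x)}"
  proof (rule homeomorphism_moving_points_exists_gen)
    show "finite {..<p}" by simp
    show "\<And>i. i \<in> {..<p} \<Longrightarrow> (f \<circ> a) i \<in> T \<and> (f \<circ> b) i \<in> T" using fT ac bc by auto
    show "pairwise (\<lambda>i j. (f \<circ> a) i \<noteq> (f \<circ> a) j \<and> (f \<circ> b) i \<noteq> (f \<circ> b) j) {..<p}"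
      unfolding pairwise_def
    proof (intro ballI impI)
      fix i j assume ij: "i \<in> {..<p}" "j \<in> {..<p}" "i \<noteq> j"
      have "a i \<noteq> a j" "b i \<noteq> b j" using ia ib ij unfolding inj_on_def by auto
      then show "(f \<circ> a) i \<noteq> (f \<circ> a) j \<and> (f \<circ> b) i \<noteq> (f \<circ> b) j"
        using ff ac bc ij by (metis comp_apply lessThan_iff)
    qed
    show "2 \<le> aff_dim T" by (rule adT)
    show "openin (top_of_set (affine hull T)) T" by (subst ahT) simp
    show "T \<subseteq> T" by simp
    show "T \<subseteq> affine hull T" by (rule hull_subset)
    show "connected T" by (rule conT)
  qed
  then obtain F F' where hF: "homeomorphism T T F F'" and Fab: "\<And>i. i < p \<Longrightarrow> F (f (a i)) = f (b i)"
    and DT: "{x. \<not> (F x = x \<and> F' x = x)} \<subseteq> T" and bD: "bounded {x. \<not> (F x = x \<and> F' x = x)}"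
    by auto
  define H where "H = (\<lambda>x. if x = c then c else f' (F (f x)))"
  define H' where "H' = (\<lambda>x. if x = c then c else f' (F' (f x)))"
  have hF': "homeomorphism T T F' F" using homeomorphism_symD[OF hF] .
  have FT: "\<And>y. y \<in> T \<Longrightarrow> F y \<in> T" "\<And>y. y \<in> T \<Longrightarrow> F' y \<in> T"
    using homeomorphism_image1[OF hF] homeomorphism_image2[OF hF] by blast+
  have FF: "\<And>y. y \<in> T \<Longrightarrow> F' (F y) = y" "\<And>y. y \<in> T \<Longrightarrow> F (F' y) = y"
    using homeomorphism_apply1[OF hF] homeomorphism_apply2[OF hF] by blast+
  have cH: "continuous_on ?S H" unfolding H_def
    by (rule ext_punct_cont[OF hf hF clT DT bD]) (use c in auto)
  have cH': "continuous_on ?S H'" unfolding H'_def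
    by (rule ext_punct_cont[OF hf hF' clT _ _]) (use c DT bD in auto)
  have HS: "H x \<in> ?S - {c}" if "x \<in> ?S - {c}" for x
    unfolding H_def using that fT FT f'S by auto
  have H'S: "H' x \<in> ?S - {c}" if "x \<in> ?S - {c}" for x
    unfolding H'_def using that fT FT f'S by auto
  have HH: "H' (H x) = x" if "x \<in> ?S" for x
  proof (cases "x = c")
    case True then show ?thesis by (simp add: H_def H'_def)
  next
    case False
    then have xs: "x \<in> ?S - {c}" using that by auto
    have "H x \<noteq> c" using HS[OF xs] by auto
    then have "H' (H x) = f' (F' (f (f' (F (f x)))))" by (simp add: H'_def H_def False)
    also have "\<dots> = x" using ff' FT FF fT ff xs by simp
    finally show ?thesis .
  qed
  have HH': "H (H' x) = x" if "x \<in> ?S" for x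
  proof (cases "x = c")
    case True then show ?thesis by (simp add: H_def H'_def)
  next
    case False
    then have xs: "x \<in> ?S - {c}" using that by auto
    have "H' x \<noteq> c" using H'S[OF xs] by auto
    then have "H (H' x) = f' (F (f (f' (F' (f x)))))" by (simp add: H'_def H_def False)
    also have "\<dots> = x" using ff' FT FF fT ff xs by simp
    finally show ?thesis .
  qed
  have "homeomorphism ?S ?S H H'"
  proof (rule homeomorphismI[OF cH cH'])
    show "H ` ?S \<subseteq> ?S" using HS by (auto simp: H_def)
    show "H' ` ?S \<subseteq> ?S" using H'S by (auto simp: H'_def)
  qed (use HH HH' in auto)
  moreover have "H (a k) = b k" if "k < p" for k
  proof -
    have "a k \<noteq> c" using ac[OF that] by auto
    then have "H (a k) = f' (f (b k))" using Fab[OF that] by (simp add: H_def)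
    then show ?thesis using ff bc[OF that] by simp
  qed
  ultimately show ?thesis using that by blast
qed

lemma RH_linear:
  fixes L :: "'a::euclidean_space \<Rightarrow> 'a"
  assumes "linear L" "linear L'" "\<And>x. L' (L x) = x" "\<And>y. L (L' y) = y"
  shows "RH L L'"
proof -
  have "continuous_on UNIV L" "continuous_on UNIV L'"
    using assms(1,2) by (simp_all add: linear_continuous_on linear_conv_bounded_linear)
  then have "homeomorphism UNIV UNIV L L'" using homeo_UNIV_I assms(3,4) by blast
  moreover have "pos_hom L" unfolding pos_hom_def using assms(1) by (simp add: linear_scale)
  ultimately show ?thesis by (simp add: RH_def)
qed

lemma RH_nonzero: assumes "RH f f'" "x \<noteq> 0" shows "f x \<noteq> 0"
proof
  assume "f x = 0"
  have "f 0 = 0" using assms(1) pos_hom_0 unfolding RH_def by blast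
  moreover have "\<And>x. f' (f x) = x" using assms(1) unfolding RH_def homeomorphism_def by simp
  ultimately show False using \<open>f x = 0\<close> assms(2) by metis
qed

lemma orbit_inj:
  assumes gb: "good_base p R" and x0: "x \<noteq> 0"
  shows "inj_on (\<lambda>k. (R ^^ k) x) {..<p}"
proof -
  have ne: "(R ^^ j) x \<noteq> 0" for j
  proof -
    have "\<exists>h. RH (R ^^ j) h" using gb unfolding good_base_def by simp
    then obtain h where "RH (R ^^ j) h" by blast
    then show ?thesis using RH_nonzero x0 by blast
  qed
  have fr: "\<And>k y. 0 < k \<Longrightarrow> k < p \<Longrightarrow> y \<noteq> 0 \<Longrightarrow> (R ^^ k) y \<noteq> y"
    using gb unfolding good_base_def by blast
  have *: "(R ^^ j) x \<noteq> (R ^^ k) x" if "j < k" "k < p" for j k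
  proof
    assume eq: "(R ^^ j) x = (R ^^ k) x"
    have "(R ^^ k) x = (R ^^ (k - j)) ((R ^^ j) x)"
      using that by (metis funpow_add le_add_diff_inverse2 less_imp_le comp_apply)
    then have "(R ^^ (k - j)) ((R ^^ j) x) = (R ^^ j) x" using eq by simp
    then show False using fr[of "k - j" "(R ^^ j) x"] ne that by simp
  qed
  show ?thesis unfolding inj_on_def
  proof (intro ballI impI)
    fix j k assume jk: "j \<in> {..<p}" "k \<in> {..<p}" "(R ^^ j) x = (R ^^ k) x"
    show "j = k"
    proof (rule ccontr)
      assume "j \<noteq> k"
      then have "j < k \<or> k < j" by arith
      then show False using * jk by (metis lessThan_iff)
    qed
  qed
qed

section \<open>Pairing rotation\<close>

lemma pairing_exists:
  assumes "CARD('n::finite) = 2 * d"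
  obtains \<pi> :: "'n::finite \<Rightarrow> 'n" and \<sigma> :: "'n \<Rightarrow> real"
  where "\<And>i. \<pi> (\<pi> i) = i" "\<And>i. \<pi> i \<noteq> i" "\<And>i. \<sigma> i * \<sigma> i = 1" "\<And>i. \<sigma> (\<pi> i) = - \<sigma> i"
proof -
  obtain b :: "'n \<Rightarrow> nat" where b: "bij_betw b UNIV {0..<2 * d}"
    using ex_bij_betw_finite_nat[of "UNIV :: 'n set"] assms by auto
  define bi where "bi = inv_into UNIV b"
  have bl: "b i < 2 * d" for i using b unfolding bij_betw_def by auto
  have bib: "b (bi m) = m" if "m < 2 * d" for m
    unfolding bi_def using b that by (simp add: bij_betw_def f_inv_into_f)
  have bbi: "bi (b i) = i" for i
    unfolding bi_def using b by (simp add: bij_betw_def inv_into_f_f)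
  define q where "q = (\<lambda>m::nat. if even m then m + 1 else m - 1)"
  have ql: "q m < 2 * d" if "m < 2 * d" for m
    using that unfolding q_def by presburger
  have qq: "q (q m) = m" for m unfolding q_def by (cases "even m") auto
  have qne: "q m \<noteq> m" for m unfolding q_def by presburger
  have qe: "even (q m) \<longleftrightarrow> odd m" for m unfolding q_def by (cases "even m") auto
  define \<pi> where "\<pi> = (\<lambda>i. bi (q (b i)))"
  define \<sigma> where "\<sigma> = (\<lambda>i. if even (b i) then (1::real) else -1)"
  have bp: "b (\<pi> i) = q (b i)" for i unfolding \<pi>_def using bib ql bl by simp
  have pa: "\<pi> x = bi (q (b x))" for x by (simp add: \<pi>_def)
  have "\<pi> (\<pi> i) = i" for i using pa[of "\<pi> i"] bp qq bbi by simp
  moreover have "\<pi> i \<noteq> i" for i using bp qne by metis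
  moreover have "\<sigma> i * \<sigma> i = 1" for i unfolding \<sigma>_def by simp
  moreover have "\<sigma> (\<pi> i) = - \<sigma> i" for i unfolding \<sigma>_def using bp qe by simp
  ultimately show ?thesis using that by blast
qed

definition rot :: "('n \<Rightarrow> 'n) \<Rightarrow> ('n \<Rightarrow> real) \<Rightarrow> real \<Rightarrow> real^'n \<Rightarrow> real^'n" where
  "rot \<pi> \<sigma> t x = (\<chi> i. cos t * x $ i - \<sigma> i * sin t * x $ (\<pi> i))"

locale pairing =
  fixes \<pi> :: "'n::finite \<Rightarrow> 'n" and \<sigma> :: "'n \<Rightarrow> real"
  assumes pp: "\<And>i. \<pi> (\<pi> i) = i" and pne: "\<And>i. \<pi> i \<noteq> i"
    and ss: "\<And>i. \<sigma> i * \<sigma> i = 1" and sp: "\<And>i. \<sigma> (\<pi> i) = - \<sigma> i"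
begin

lemma rot_add: "rot \<pi> \<sigma> s (rot \<pi> \<sigma> t x) = rot \<pi> \<sigma> (s + t) x"
proof -
  have "cos s * (cos t * x $ i - \<sigma> i * sin t * x $ \<pi> i) -
        \<sigma> i * sin s * (cos t * x $ \<pi> i - \<sigma> (\<pi> i) * sin t * x $ \<pi> (\<pi> i)) =
        cos (s + t) * x $ i - \<sigma> i * sin (s + t) * x $ \<pi> i" for i
  proof -
    have "\<sigma> i * sin s * (\<sigma> (\<pi> i) * sin t * x $ \<pi> (\<pi> i)) = - (\<sigma> i * \<sigma> i) * sin s * sin t * x $ i"
      using sp pp by simp
    also have "\<dots> = - sin s * sin t * x $ i" using ss by simp
    finally have e: "\<sigma> i * sin s * (\<sigma> (\<pi> i) * sin t * x $ \<pi> (\<pi> i)) = - sin s * sin t * x $ i" .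
    show ?thesis unfolding cos_add sin_add using e by (simp add: algebra_simps)
  qed
  then show ?thesis unfolding rot_def by (simp add: vec_eq_iff)
qed

lemma rot_0: "rot \<pi> \<sigma> 0 x = x"
  unfolding rot_def by (simp add: vec_eq_iff)

lemma rot_pow: "(rot \<pi> \<sigma> t ^^ k) = rot \<pi> \<sigma> (real k * t)"
proof (induction k)
  case 0 then show ?case by (simp add: fun_eq_iff rot_0)
next
  case (Suc k) then show ?case by (simp add: fun_eq_iff rot_add algebra_simps)
qed

lemma rot_linear: "linear (rot \<pi> \<sigma> t)"
  by (rule linearI) (simp_all add: rot_def vec_eq_iff algebra_simps)

lemma RH_rot: "RH (rot \<pi> \<sigma> t) (rot \<pi> \<sigma> (- t))"
  by (rule RH_linear[OF rot_linear rot_linear]) (simp_all add: rot_add rot_0)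

lemma rot_fix:
  assumes "cos \<theta> \<noteq> 1" "rot \<pi> \<sigma> \<theta> x = x"
  shows "x = 0"
proof -
  let ?c = "cos \<theta>" and ?s = "sin \<theta>"
  have comp: "?c * x $ i - \<sigma> i * ?s * x $ \<pi> i = x $ i" for i
    using assms(2) unfolding rot_def by (simp add: vec_eq_iff) 
  have "x $ i = 0" for i
  proof -
    let ?A = "x $ i" and ?B = "x $ \<pi> i"
    have e1: "(1 - ?c) * ?A = - (\<sigma> i * ?s * ?B)" using comp[of i] by (simp add: algebra_simps)
    have e2: "(1 - ?c) * ?B = \<sigma> i * ?s * ?A" using comp[of "\<pi> i"] pp sp by (simp add: algebra_simps)
    have "((1 - ?c)^2 + ?s^2) * ?A = (1 - ?c) * ((1 - ?c) * ?A) + ?s^2 * ?A"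
      by algebra
    also have "\<dots> = - (\<sigma> i * ?s) * ((1 - ?c) * ?B) + ?s^2 * ?A" by (subst e1) (simp add: algebra_simps)
    also have "\<dots> = - (\<sigma> i * \<sigma> i) * ?s^2 * ?A + ?s^2 * ?A" by (subst e2) (simp add: power2_eq_square algebra_simps)
    also have "\<dots> = 0" using ss by simp
    finally have z: "((1 - ?c)^2 + ?s^2) * ?A = 0" .
    have "(1 - ?c)^2 + ?s^2 = 2 - 2 * ?c" using sin_cos_squared_add[of \<theta>] by (simp add: power2_eq_square algebra_simps)
    moreover have "?c < 1" using assms(1) cos_le_one[of \<theta>] by linarith
    ultimately have "(1 - ?c)^2 + ?s^2 \<noteq> 0" by simp
    then show ?thesis using z assms(1) by simp
  qed
  then show ?thesis by (simp add: vec_eq_iff)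
qed

lemma cos_frac_ne1:
  assumes "0 < k" "k < p"
  shows "cos (real k * (2 * pi / real p)) \<noteq> 1"
proof
  assume "cos (real k * (2 * pi / real p)) = 1"
  then obtain n :: int where n: "real k * (2 * pi / real p) = real_of_int n * 2 * pi" using cos_one_2pi_int by blast
  have p0: "real p > 0" using assms by simp
  have "real k = n * real p" using n p0 by (simp add: field_simps)
  then have "int k = n * int p" by (metis of_int_of_nat_eq of_int_eq_iff of_int_mult)
  moreover have "0 < int k" "int k < int p" using assms by auto
  ultimately have eq: "int k = n * int p" and lo: "0 < int k" and hi: "int k < int p" by auto
  consider "n \<le> 0" | "n \<ge> 1" by arith
  then show False
  proof cases
    case 1
    then have "n * int p \<le> 0" by (simp add: mult_nonpos_nonneg)
    then show False using eq lo by simp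
  next
    case 2
    then have h: "1 * int p \<le> n * int p" by (intro mult_right_mono) auto
    show False using eq hi h by linarith
  qed
qed

lemma good_base_rot:
  assumes "p > 0"
  shows "good_base p (rot \<pi> \<sigma> (2 * pi / real p))"
proof -
  let ?t = "2 * pi / real p"
  have 1: "rot \<pi> \<sigma> ?t ^^ p = id"
    using assms by (simp add: rot_pow fun_eq_iff rot_def vec_eq_iff)
  have 2: "\<forall>k. \<exists>h. RH (rot \<pi> \<sigma> ?t ^^ k) h" unfolding rot_pow using RH_rot by blast
  have 3: "\<forall>k. 0 < k \<and> k < p \<longrightarrow> (\<forall>x. x \<noteq> 0 \<longrightarrow> (rot \<pi> \<sigma> ?t ^^ k) x \<noteq> x)"
    unfolding rot_pow using rot_fix cos_frac_ne1 by blast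
  show ?thesis unfolding good_base_def using 1 2 3 by (rule conjI[OF _ conjI])
qed

lemma rot_axis_norm: "norm (rot \<pi> \<sigma> t (axis i0 1)) = 1"
proof -
  have eq: "rot \<pi> \<sigma> t (axis i0 1) = cos t *\<^sub>R axis i0 1 + (- \<sigma> (\<pi> i0) * sin t) *\<^sub>R axis (\<pi> i0) 1"
  proof -
    have "\<pi> i = i0 \<longleftrightarrow> i = \<pi> i0" for i using pp by metis
    then show ?thesis unfolding rot_def by (auto simp: vec_eq_iff axis_def)
  qed
  have ne: "i0 \<noteq> \<pi> i0" using pne by metis
  have "(norm (rot \<pi> \<sigma> t (axis i0 1)))^2 = cos t ^ 2 + (\<sigma> (\<pi> i0) * \<sigma> (\<pi> i0)) * sin t ^ 2"
    unfolding eq power2_norm_eq_inner using ne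
    by (simp add: inner_add_left inner_add_right inner_axis_axis power2_eq_square algebra_simps)
  also have "\<dots> = 1" using ss by simp
  finally have "norm (rot \<pi> \<sigma> t (axis i0 1)) = 1 \<or> norm (rot \<pi> \<sigma> t (axis i0 1)) = -1"
    by (simp add: power2_eq_1_iff)
  then show ?thesis using norm_ge_zero[of "rot \<pi> \<sigma> t (axis i0 1)"] by linarith
qed

end

definition clamp :: "real \<Rightarrow> real" where "clamp s = max 0 (min 1 s)"

lemma clamp_mono: "s \<le> t \<Longrightarrow> clamp s \<le> clamp t" unfolding clamp_def by simp

definition plf :: "nat \<Rightarrow> (nat \<Rightarrow> real) \<Rightarrow> real \<Rightarrow> real" where
  "plf p \<alpha> \<theta> = \<alpha> 0 + (\<Sum>k<p. (\<alpha> (Suc k) - \<alpha> k) * clamp (\<theta> * real p / (2 * pi) - real k))"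

lemma plf_cont: "continuous_on UNIV (plf p \<alpha>)"
  unfolding plf_def clamp_def by (intro continuous_intros) auto

lemma plf_nodes:
  assumes "p > 0" "j \<le> p"
  shows "plf p \<alpha> (2 * pi * real j / real p) = \<alpha> j"
proof -
  have s: "2 * pi * real j / real p * real p / (2 * pi) = real j" using assms by simp
  have c: "clamp (real j - real k) = (if k \<in> {..<j} then 1 else 0)" for k
    unfolding clamp_def by auto
  have "(\<Sum>k<p. (\<alpha> (Suc k) - \<alpha> k) * clamp (real j - real k)) =
        (\<Sum>k<p. if k \<in> {..<j} then (\<alpha> (Suc k) - \<alpha> k) else 0)"
    by (rule sum.cong) (auto simp: c)
  also have "\<dots> = (\<Sum>k\<in>{..<p} \<inter> {..<j}. \<alpha> (Suc k) - \<alpha> k)"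
    by (rule sum.inter_restrict[symmetric]) simp
  also have "{..<p} \<inter> {..<j} = {..<j}" using assms by auto
  also have "(\<Sum>k<j. \<alpha> (Suc k) - \<alpha> k) = \<alpha> j - \<alpha> 0" by (rule sum_lessThan_telescope)
  finally show ?thesis unfolding plf_def s by simp
qed

lemma plf_strict:
  assumes p0: "p > 0" and inc: "\<And>k. k < p \<Longrightarrow> \<alpha> k < \<alpha> (Suc k)"
    and ab: "0 \<le> a" "a < b" "b \<le> 2 * pi"
  shows "plf p \<alpha> a < plf p \<alpha> b"
proof -
  define sa where "sa = a * real p / (2 * pi)"
  define sb where "sb = b * real p / (2 * pi)"
  have sab: "sa < sb" unfolding sa_def sb_def using ab p0 by (simp add: divide_strict_right_mono)
  have sa0: "0 \<le> sa" unfolding sa_def using ab by simp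
  have sap: "sa < real p"
  proof -
    have "a < 2 * pi" using ab by simp
    then have "a * real p < 2 * pi * real p" using p0 by simp
    then show ?thesis unfolding sa_def by (simp add: divide_less_eq mult.commute)
  qed
  define k0 where "k0 = nat \<lfloor>sa\<rfloor>"
  have k0a: "real k0 \<le> sa" "sa < real k0 + 1" unfolding k0_def using sa0
    by (auto simp: of_nat_nat)
  have k0p: "k0 < p" using k0a sap by linarith
  define t where "t = (\<lambda>k. (\<alpha> (Suc k) - \<alpha> k) * (clamp (sb - real k) - clamp (sa - real k)))"
  have t0: "0 \<le> t k" if "k \<in> {..<p}" for k
  proof -
    have "0 \<le> \<alpha> (Suc k) - \<alpha> k" using inc that by (simp add: less_imp_le)
    moreover have "0 \<le> clamp (sb - real k) - clamp (sa - real k)" using clamp_mono[of "sa - real k" "sb - real k"] sab by simp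
    ultimately show ?thesis unfolding t_def by simp
  qed
  have tk0: "0 < t k0"
  proof -
    have "clamp (sa - real k0) = sa - real k0" unfolding clamp_def using k0a by simp
    moreover have "sa - real k0 < clamp (sb - real k0)" unfolding clamp_def using k0a sab by simp
    moreover have "0 < \<alpha> (Suc k0) - \<alpha> k0" using inc k0p by simp
    ultimately show ?thesis unfolding t_def by simp
  qed
  have "t k0 \<le> (\<Sum>k<p. t k)" by (rule member_le_sum) (use k0p t0 in auto)
  then have pos: "0 < (\<Sum>k<p. t k)" using tk0 by simp
  have "plf p \<alpha> b - plf p \<alpha> a = (\<Sum>k<p. t k)"
    unfolding plf_def t_def sa_def sb_def by (simp add: sum_subtractf[symmetric] algebra_simps)
  then show ?thesis using pos by simp
qed

lemma Arg2pi_cis: "0 \<le> t \<Longrightarrow> t < 2 * pi \<Longrightarrow> Arg2pi (cis t) = t"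
  by (rule Arg2pi_unique[of 1]) (simp_all add: cis_conv_exp)

lemma cis_Arg2pi: "norm z = 1 \<Longrightarrow> cis (Arg2pi z) = z"
proof -
  assume n: "norm z = 1"
  have "is_Arg z (Arg2pi z)" using Arg2pi by blast
  then show ?thesis unfolding is_Arg_def using n by (simp add: cis_conv_exp)
qed

lemma cis_inj_2pi:
  assumes "0 \<le> u" "u < 2 * pi" "0 \<le> v" "v < 2 * pi" "cis u = cis v"
  shows "u = v"
  using Arg2pi_cis[of u] Arg2pi_cis[of v] assms by metis


lemma circle_homeo:
  assumes p0: "p > 0" and finB: "finite B" and Bs: "B \<subseteq> sphere (0::complex) 1" and cB: "card B = p"
  obtains H H' where "homeomorphism (sphere 0 1) (sphere 0 1) H H'"
    "(\<lambda>k. H (cis (2 * pi * real k / real p))) ` {..<p} = B"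
proof -
  let ?S = "sphere (0::complex) 1"
  have injA: "inj_on Arg2pi B"
  proof
    fix z w assume "z \<in> B" "w \<in> B" "Arg2pi z = Arg2pi w"
    then show "z = w" using cis_Arg2pi Bs by (metis mem_sphere_0 subsetD)
  qed
  define A where "A = Arg2pi ` B"
  have finA: "finite A" unfolding A_def using finB by simp
  have cA: "card A = p" unfolding A_def using card_image[OF injA] cB by simp
  obtain xs where xs: "sorted_wrt (<) xs" "set xs = A" using finite_set_strict_sorted[OF finA] by blast
  have dxs: "distinct xs" using xs(1) strict_sorted_iff by blast
  have lxs: "length xs = p" using distinct_card[OF dxs] xs(2) cA by simp
  have xsr: "0 \<le> xs ! k \<and> xs ! k < 2 * pi" if "k < p" for k
  proof -
    have "xs ! k \<in> A" using xs(2) lxs that nth_mem by blast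
    then show ?thesis unfolding A_def using Arg2pi by auto
  qed
  define \<alpha> where "\<alpha> = (\<lambda>k. if k < p then xs ! k else xs ! 0 + 2 * pi)"
  have inc: "\<alpha> k < \<alpha> (Suc k)" if "k < p" for k
  proof (cases "Suc k < p")
    case True
    then show ?thesis unfolding \<alpha>_def using sorted_wrt_nth_less[OF xs(1), of k "Suc k"] lxs by simp
  next
    case False
    then show ?thesis unfolding \<alpha>_def using that xsr[of k] xsr[of 0] p0 by simp
  qed
  define F where "F = plf p \<alpha>"
  have Fc: "continuous_on UNIV F" unfolding F_def by (rule plf_cont)
  have Fn: "F (2 * pi * real j / real p) = \<alpha> j" if "j \<le> p" for j
    unfolding F_def using plf_nodes[OF p0 that] .
  have F0: "F 0 = \<alpha> 0" using Fn[of 0] by simp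
  have F2: "F (2 * pi) = \<alpha> 0 + 2 * pi" using Fn[of p] p0 by (simp add: \<alpha>_def)
  have Fs: "F a < F b" if "0 \<le> a" "a < b" "b \<le> 2 * pi" for a b
    unfolding F_def by (rule plf_strict[of p \<alpha>, OF p0 inc that])
  have a0: "0 \<le> \<alpha> 0" "\<alpha> 0 < 2 * pi" using xsr[of 0] p0 by (simp_all add: \<alpha>_def)
  have Fr: "\<alpha> 0 \<le> F a \<and> F a < \<alpha> 0 + 2 * pi" if "0 \<le> a" "a < 2 * pi" for a
  proof -
    have "F 0 \<le> F a" using Fs[of 0 a] that by (cases "a = 0") auto
    moreover have "F a < F (2 * pi)" using Fs[of a "2 * pi"] that by simp
    ultimately show ?thesis using F0 F2 by simp
  qed
  define H where "H = (\<lambda>z. cis (F (Arg2pi z)))"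
  have He: "H (cis \<theta>) = cis (F \<theta>)" if "0 \<le> \<theta>" "\<theta> \<le> 2 * pi" for \<theta>
  proof (cases "\<theta> = 2 * pi")
    case True
    have "Arg2pi 1 = 0" using Arg2pi_cis[of 0] by simp
    then have "H (cis \<theta>) = cis (\<alpha> 0)" using True F0 by (simp add: H_def)
    also have "\<dots> = cis (\<alpha> 0 + 2 * pi)" by (simp add: cis.ctr)
    finally show ?thesis using True F2 by simp
  next
    case False
    then show ?thesis using that by (simp add: H_def Arg2pi_cis)
  qed
  have HS: "H z \<in> ?S" for z by (simp add: H_def)
  have img: "cis ` {0..2 * pi} = ?S"
  proof
    show "cis ` {0..2 * pi} \<subseteq> ?S" by auto
    show "?S \<subseteq> cis ` {0..2 * pi}"
    proof
      fix w :: complex assume "w \<in> ?S"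
      then have "cis (Arg2pi w) = w" using cis_Arg2pi by simp
      moreover have "Arg2pi w \<in> {0..2 * pi}" using Arg2pi[of w] by simp
      ultimately show "w \<in> cis ` {0..2 * pi}" by (metis image_eqI)
    qed
  qed
  have Hcont: "continuous_on ?S H"
  proof -
    let ?X = "top_of_set {0..2 * pi}" and ?Y = "top_of_set ?S"
    have cm: "continuous_map ?X ?Y cis"
      using img by (auto intro!: continuous_intros simp: continuous_on_cis)
    have "quotient_map ?X ?Y cis"
    proof (rule continuous_imp_quotient_map[OF cm])
      show "compact_space ?X" by (simp add: compact_space_subtopology)
      show "Hausdorff_space ?Y" by (simp add: Hausdorff_space_subtopology)
      show "cis ` topspace ?X = topspace ?Y" using img by simp
    qed
    moreover have "continuous_map ?X euclidean (H \<circ> cis)"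
    proof -
      have "continuous_on {0..2 * pi} (\<lambda>\<theta>. cis (F \<theta>))"
        by (intro continuous_intros continuous_on_subset[OF Fc]) auto
      then have "continuous_on {0..2 * pi} (H \<circ> cis)"
        by (rule continuous_on_eq) (simp add: He)
      then show ?thesis by simp
    qed
    ultimately have "continuous_map ?Y euclidean H" by (rule continuous_compose_quotient_map)
    then show ?thesis by simp
  qed
  have Hinj: "inj_on H ?S"
  proof
    fix z w assume z: "z \<in> ?S" and w: "w \<in> ?S" and eq: "H z = H w"
    let ?a = "Arg2pi z" and ?b = "Arg2pi w"
    have ra: "0 \<le> ?a" "?a < 2 * pi" and rb: "0 \<le> ?b" "?b < 2 * pi" using Arg2pi by auto
    have "cis (F ?a - \<alpha> 0) = cis (F ?b - \<alpha> 0)"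
      using eq unfolding H_def by (simp add: cis_divide[symmetric])
    then have "F ?a - \<alpha> 0 = F ?b - \<alpha> 0"
      by (rule cis_inj_2pi[rotated 4]) (use Fr[OF ra] Fr[OF rb] in auto)
    then have "F ?a = F ?b" by simp
    then have "?a = ?b" using Fs[of ?a ?b] Fs[of ?b ?a] ra rb by (metis linorder_neqE_linordered_idom less_irrefl less_imp_le)
    then show "z = w" using cis_Arg2pi z w by (metis mem_sphere_0)
  qed
  have Hsurj: "H ` ?S = ?S"
  proof
    show "H ` ?S \<subseteq> ?S" using HS by auto
    show "?S \<subseteq> H ` ?S"
    proof
      fix w :: complex assume w: "w \<in> ?S"
      define \<phi> where "\<phi> = Arg2pi w"
      have \<phi>r: "0 \<le> \<phi>" "\<phi> < 2 * pi" unfolding \<phi>_def using Arg2pi by auto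
      define \<tau> where "\<tau> = (if \<alpha> 0 \<le> \<phi> then \<phi> else \<phi> + 2 * pi)"
      have \<tau>r: "\<alpha> 0 \<le> \<tau>" "\<tau> < \<alpha> 0 + 2 * pi" unfolding \<tau>_def using \<phi>r a0 by auto
      have ct: "cis \<tau> = w"
      proof -
        have "cis \<tau> = cis \<phi>" unfolding \<tau>_def by (simp add: cis.ctr)
        then show ?thesis unfolding \<phi>_def using cis_Arg2pi w by simp
      qed
      obtain \<theta> where \<theta>: "0 \<le> \<theta>" "\<theta> \<le> 2 * pi" "F \<theta> = \<tau>"
        using IVT'[of F 0 \<tau> "2 * pi"] F0 F2 \<tau>r continuous_on_subset[OF Fc] by force
      have "\<theta> \<noteq> 2 * pi" using \<theta> F2 \<tau>r by auto
      then have "\<theta> < 2 * pi" using \<theta> by simp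
      have "H (cis \<theta>) = w" using He[OF \<theta>(1,2)] \<theta>(3) ct by simp
      moreover have "cis \<theta> \<in> ?S" by simp
      ultimately show "w \<in> H ` ?S" by (metis image_eqI)
    qed
  qed
  obtain H' where hom: "homeomorphism ?S ?S H H'"
    using homeomorphism_compact[OF compact_sphere Hcont Hsurj Hinj] by blast
  have "(\<lambda>k. H (cis (2 * pi * real k / real p))) ` {..<p} = B"
  proof -
    have "H (cis (2 * pi * real k / real p)) = cis (xs ! k)" if "k < p" for k
    proof -
      have "0 \<le> 2 * pi * real k / real p" by simp
      moreover have "2 * pi * real k / real p \<le> 2 * pi" using that p0 by (simp add: field_simps)
      ultimately have "H (cis (2 * pi * real k / real p)) = cis (F (2 * pi * real k / real p))"
        by (rule He)
      also have "\<dots> = cis (\<alpha> k)" using Fn[of k] that by simp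
      finally show ?thesis using that by (simp add: \<alpha>_def)
    qed
    then have "(\<lambda>k. H (cis (2 * pi * real k / real p))) ` {..<p} = (\<lambda>k. cis (xs ! k)) ` {..<p}"
      by (intro image_cong) auto
    also have "\<dots> = cis ` set xs"
    proof -
      have "(\<lambda>k. cis (xs ! k)) ` {..<p} = cis ` ((\<lambda>k. xs ! k) ` {..<length xs})" using lxs by (simp add: image_image)
      also have "(\<lambda>k. xs ! k) ` {..<length xs} = set xs" by (auto simp: in_set_conv_nth)
      finally show ?thesis .
    qed
    also have "\<dots> = cis ` Arg2pi ` B" using xs(2) A_def by simp
    also have "\<dots> = B" using cis_Arg2pi Bs by (force simp: image_iff)
    finally show ?thesis .
  qed
  then show ?thesis using hom that by blast
qed


lemma RH_cmult:
  fixes a :: complex assumes "a \<noteq> 0"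
  shows "RH (\<lambda>z. a * z) (\<lambda>z. inverse a * z)"
proof (rule RH_linear)
  show "linear (\<lambda>z. a * z)" "linear (\<lambda>z. inverse a * z)"
    using bounded_linear_mult_right bounded_linear.linear by blast+
  show "\<And>x. inverse a * (a * x) = x" "\<And>y. a * (inverse a * y) = y"
    using assms by (simp_all add: field_simps)
qed

lemma core_complex:
  fixes Y :: "complex set"
  assumes p0: "p > 0" and fin: "finite Y" and cY: "card Y = p" and Y0: "0 \<notin> Y" and inj: "inj_on sgn Y"
  shows "\<exists>g y0. good_base p g \<and> y0 \<in> Y \<and> {(g ^^ k) y0 | k. k < p} = Y"
proof -
  define c where "c = cis (2 * pi / real p)"
  define R where "R = (\<lambda>z::complex. c * z)"
  have Rk: "(R ^^ k) = (\<lambda>z. c ^ k * z)" for k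
    by (induction k) (simp_all add: R_def fun_eq_iff)
  have ck: "c ^ k = cis (2 * pi * real k / real p)" for k
    unfolding c_def Complex.DeMoivre by (simp add: field_simps)
  have c0: "c ^ k \<noteq> 0" for k unfolding ck by (metis norm_cis zero_neq_one norm_zero)
  have gb: "good_base p R"
  proof -
    have 1: "R ^^ p = id" using p0 unfolding Rk ck by (simp add: fun_eq_iff)
    have 2: "\<forall>k. \<exists>h. RH (R ^^ k) h" unfolding Rk using RH_cmult c0 by blast
    have 3: "\<forall>k. 0 < k \<and> k < p \<longrightarrow> (\<forall>x. x \<noteq> 0 \<longrightarrow> (R ^^ k) x \<noteq> x)"
    proof (intro allI impI)
      fix k x assume k: "0 < k \<and> k < p" and x: "(x::complex) \<noteq> 0"
      show "(R ^^ k) x \<noteq> x"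
      proof
        assume "(R ^^ k) x = x"
        then have "c ^ k * x = 1 * x" unfolding Rk by simp
        then have "c ^ k = 1" using x by (metis mult_cancel_right)
        then have "cis (2 * pi * real k / real p) = cis 0" unfolding ck by simp
        moreover have "2 * pi * real k / real p < 2 * pi" using k by (simp add: field_simps)
        ultimately have "2 * pi * real k / real p = 0" using cis_inj_2pi[of "2 * pi * real k / real p" 0] by simp
        then show False using k by simp
      qed
    qed
    show ?thesis unfolding good_base_def using 1 2 3 by (rule conjI[OF _ conjI])
  qed
  have Bs: "sgn ` Y \<subseteq> sphere 0 1" using Y0 by (auto simp: norm_sgn)
  have cB: "card (sgn ` Y) = p" using card_image[OF inj] cY by simp
  obtain H H' where H: "homeomorphism (sphere 0 1) (sphere 0 1) H H'"
    and Hi: "(\<lambda>k. H (cis (2 * pi * real k / real p))) ` {..<p} = sgn ` Y"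
    using circle_homeo[OF p0 _ Bs cB] fin by blast
  show ?thesis
  proof (rule core_from_sphere[OF gb H _ _ fin Y0 inj p0])
    show "\<And>k. k < p \<Longrightarrow> norm ((R ^^ k) 1) = 1" unfolding Rk ck by simp
    show "(\<lambda>k. H ((R ^^ k) 1)) ` {..<p} = sgn ` Y" unfolding Rk ck using Hi by simp
  qed
qed

definition goodset :: "('a::real_normed_vector) set \<Rightarrow> 'a set \<Rightarrow> bool" where
  "goodset C Y \<longleftrightarrow> finite Y \<and> Y \<subseteq> C \<and> 0 \<notin> Y \<and> inj_on sgn Y"

lemma sgn_eq_line:
  fixes q y :: "'a::real_normed_vector"
  assumes "q \<noteq> 0" "y \<noteq> 0" "sgn q = sgn y"
  shows "q \<in> range (\<lambda>t. t *\<^sub>R y)"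
proof -
  have "q = norm q *\<^sub>R sgn q" by (simp add: sgn_div_norm assms(1))
  also have "\<dots> = norm q *\<^sub>R sgn y" using assms(3) by simp
  also have "\<dots> = (norm q / norm y) *\<^sub>R y" by (simp add: sgn_div_norm divide_inverse)
  finally show ?thesis by blast
qed

lemma goodset_extend:
  fixes C :: "'a::euclidean_space set"
  assumes lines: "\<And>v. finite (C \<inter> range (\<lambda>t. t *\<^sub>R v))"
    and g: "goodset C Y" and AC: "A \<subseteq> C" and inf: "infinite A"
  shows "\<exists>q\<in>A. q \<notin> Y \<and> goodset C (insert q Y)"
proof -
  have fY: "finite Y" and YC: "Y \<subseteq> C" and Y0: "0 \<notin> Y" and iY: "inj_on sgn Y"
    using g unfolding goodset_def by auto
  define Bad where "Bad = C \<inter> (\<Union>y\<in>insert 0 Y. range (\<lambda>t. t *\<^sub>R y))"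
  have "Bad = (\<Union>y\<in>insert 0 Y. C \<inter> range (\<lambda>t. t *\<^sub>R y))" unfolding Bad_def by blast
  moreover have "finite (\<Union>y\<in>insert 0 Y. C \<inter> range (\<lambda>t. t *\<^sub>R y))"
    using fY lines by (intro finite_UN_I) auto
  ultimately have fB: "finite Bad" by simp
  then have "infinite (A - Bad)" using inf by (simp add: Diff_infinite_finite)
  then obtain q where q: "q \<in> A" "q \<notin> Bad" by (metis Diff_iff finite.emptyI ex_in_conv)
  have qC: "q \<in> C" using q AC by auto
  have q0: "q \<noteq> 0"
  proof
    assume "q = 0"
    then have "q \<in> range (\<lambda>t. t *\<^sub>R (0::'a))" by simp
    then show False using q qC unfolding Bad_def by blast
  qed
  have ql: "q \<notin> range (\<lambda>t. t *\<^sub>R y)" if "y \<in> Y" for y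
    using q qC that unfolding Bad_def by blast
  have qY: "q \<notin> Y"
  proof
    assume "q \<in> Y"
    then have "q \<in> range (\<lambda>t. t *\<^sub>R q)" by (metis rangeI scaleR_one)
    then show False using ql \<open>q \<in> Y\<close> by blast
  qed
  have "sgn q \<notin> sgn ` Y"
  proof
    assume "sgn q \<in> sgn ` Y"
    then obtain y where y: "y \<in> Y" "sgn q = sgn y" by auto
    then have "y \<noteq> 0" using Y0 by auto
    then have "q \<in> range (\<lambda>t. t *\<^sub>R y)" using sgn_eq_line q0 y by blast
    then show False using ql y by blast
  qed
  then have "inj_on sgn (insert q Y)" using iY qY by simp
  then have "goodset C (insert q Y)" using fY YC qC q0 Y0 unfolding goodset_def by auto
  then show ?thesis using q qY by blast
qed

lemma goodset_grow:
  fixes C :: "'a::euclidean_space set"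
  assumes lines: "\<And>v. finite (C \<inter> range (\<lambda>t. t *\<^sub>R v))" and inf: "infinite C"
  shows "goodset C Y \<Longrightarrow> card Y \<le> m \<Longrightarrow> \<exists>Y'. Y \<subseteq> Y' \<and> goodset C Y' \<and> card Y' = m"
proof (induction m arbitrary: Y)
  case 0
  then have "Y = {}" unfolding goodset_def by auto
  then show ?case using 0 by auto
next
  case (Suc m)
  show ?case
  proof (cases "card Y = Suc m")
    case True then show ?thesis using Suc by blast
  next
    case False
    then have "card Y \<le> m" using Suc by simp
    then obtain Y' where Y': "Y \<subseteq> Y'" "goodset C Y'" "card Y' = m" using Suc by blast
    obtain q where q: "q \<notin> Y'" "goodset C (insert q Y')"
      using goodset_extend[OF lines Y'(2) _ inf] by blast
    have "card (insert q Y') = Suc m" using q Y' unfolding goodset_def by simp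
    then show ?thesis using Y' q by blast
  qed
qed

lemma select_points:
  fixes \<gamma> :: "complex \<Rightarrow> real^'n" and \<epsilon> :: real
  assumes cc: "closed_convex_curve \<gamma>" and e: "\<epsilon> > 0" and dim: "2 \<le> CARD('n)"
  shows "\<exists>p Y. prime p \<and> goodset (\<gamma> ` S1) Y \<and> card Y = p \<and>
           (\<forall>y\<in>\<gamma> ` S1. \<exists>x\<in>Y. dist y x \<le> \<epsilon>)"
proof -
  let ?C = "\<gamma> ` S1"
  have cg: "continuous_on S1 \<gamma>" and ig: "inj_on \<gamma> S1"
    and hyp: "\<And>a b. a \<noteq> 0 \<Longrightarrow> finite (?C \<inter> {x. a \<bullet> x = b})"
    using cc unfolding closed_convex_curve_def by auto
  have lines: "finite (?C \<inter> range (\<lambda>t. t *\<^sub>R v))" for v :: "real^'n"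
  proof -
    obtain a :: "real^'n" where a: "a \<noteq> 0" "orthogonal v a"
      using orthogonal_to_vector_exists[of v] dim by auto
    have "range (\<lambda>t. t *\<^sub>R v) \<subseteq> {x. a \<bullet> x = 0}"
      using a(2) by (auto simp: orthogonal_def inner_commute)
    then have "?C \<inter> range (\<lambda>t. t *\<^sub>R v) \<subseteq> ?C \<inter> {x. a \<bullet> x = 0}" by blast
    then show ?thesis using hyp[OF a(1)] finite_subset by blast
  qed
  have S1c: "compact S1" unfolding S1_def by simp
  have compC: "compact ?C" by (rule compact_continuous_image[OF cg S1c])
  have arcs: "infinite (?C \<inter> ball c r)" if cr: "c \<in> ?C" "r > 0" for c r
  proof -
    obtain z where z: "z \<in> S1" "c = \<gamma> z" using cr by blast
    obtain \<delta> where \<delta>: "\<delta> > 0" "\<And>w. w \<in> S1 \<Longrightarrow> dist w z < \<delta> \<Longrightarrow> dist (\<gamma> w) (\<gamma> z) < r"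
      using cg z(1) cr(2) unfolding continuous_on_iff by metis
    have conS: "connected S1" unfolding S1_def by (rule connected_sphere) simp
    have ns: "S1 \<noteq> {x}" for x
    proof
      assume "S1 = {x}"
      moreover have "(1::complex) \<in> S1" "(-1::complex) \<in> S1" unfolding S1_def by auto
      ultimately have "(1::complex) = x" "(-1::complex) = x" by auto
      then have "(1::complex) = -1" by simp
      then show False by (simp add: complex_eq_iff)
    qed
    have "z islimpt S1" by (rule connected_imp_perfect[OF conS z(1) ns])
    then have infz: "infinite (S1 \<inter> ball z \<delta>)" using \<delta>(1) islimpt_eq_infinite_ball by blast
    have "\<gamma> ` (S1 \<inter> ball z \<delta>) \<subseteq> ?C \<inter> ball c r"
      using \<delta>(2) z by (auto simp: dist_commute)
    moreover have "infinite (\<gamma> ` (S1 \<inter> ball z \<delta>))"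
      using infz finite_imageD inj_on_subset[OF ig] by blast
    ultimately show ?thesis using finite_subset by blast
  qed
  have "(1::complex) \<in> S1" unfolding S1_def by simp
  then have infC: "infinite ?C" using arcs[of "\<gamma> 1" 1] by (metis finite_Int imageI zero_less_one)
  obtain N where N: "N \<subseteq> ?C" "finite N" "?C \<subseteq> (\<Union>c\<in>N. ball c (\<epsilon>/2))"
  proof (rule compactE_image[OF compC, of ?C "\<lambda>c. ball c (\<epsilon>/2)"])
    show "\<And>T. T \<in> ?C \<Longrightarrow> open (ball T (\<epsilon> / 2))" by simp
    show "?C \<subseteq> (\<Union>c\<in>?C. ball c (\<epsilon> / 2))" using e by force
  qed blast
  have net: "\<exists>Y. goodset ?C Y \<and> (\<forall>c\<in>M. \<exists>y\<in>Y. dist c y < \<epsilon>/2)" if "finite M" "M \<subseteq> ?C" for M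
    using that
  proof (induction M rule: finite_induct)
    case empty
    have "goodset ?C {}" unfolding goodset_def by simp
    then show ?case by blast
  next
    case (insert c M)
    then obtain Y where Y: "goodset ?C Y" "\<forall>c\<in>M. \<exists>y\<in>Y. dist c y < \<epsilon>/2" by auto
    have "infinite (?C \<inter> ball c (\<epsilon>/2))" using arcs insert(4) e by simp
    then obtain q where q: "q \<in> ?C \<inter> ball c (\<epsilon>/2)" "goodset ?C (insert q Y)"
      using goodset_extend[OF lines Y(1), of "?C \<inter> ball c (\<epsilon>/2)"] by blast
    have "\<forall>c'\<in>insert c M. \<exists>y\<in>insert q Y. dist c' y < \<epsilon>/2"
      using Y(2) q(1) by auto
    then show ?case using q(2) by blast
  qed
  obtain Y where Y: "goodset ?C Y" "\<forall>c\<in>N. \<exists>y\<in>Y. dist c y < \<epsilon>/2" using net[OF N(2) N(1)] by blast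
  obtain p where p: "prime p" "p > card Y" using bigger_prime by blast
  obtain Y' where Y': "Y \<subseteq> Y'" "goodset ?C Y'" "card Y' = p"
    using goodset_grow[OF lines infC Y(1), of p] p by auto
  have "\<forall>y\<in>?C. \<exists>x\<in>Y'. dist y x \<le> \<epsilon>"
  proof
    fix y assume "y \<in> ?C"
    then obtain c where c: "c \<in> N" "dist c y < \<epsilon>/2" using N(3) by auto
    then obtain x where x: "x \<in> Y" "dist c x < \<epsilon>/2" using Y(2) by blast
    have "dist y x \<le> dist y c + dist c x" by (rule dist_triangle)
    also have "\<dots> < \<epsilon>" using c x by (simp add: dist_commute)
    finally show "\<exists>x\<in>Y'. dist y x \<le> \<epsilon>" using x Y'(1) by (meson less_imp_le subsetD)
  qed
  then show ?thesis using p Y' by blast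
qed

lemma good_base_transfer:
  fixes L :: "'a::euclidean_space \<Rightarrow> 'b::euclidean_space"
  assumes gb: "good_base p g" and lL: "linear L" and lL': "linear L'"
    and LL: "\<And>x. L' (L x) = x" and LL': "\<And>y. L (L' y) = y"
  shows "good_base p (L \<circ> g \<circ> L')"
proof -
  have cL: "continuous_on UNIV L" "continuous_on UNIV L'"
    using lL lL' by (simp_all add: linear_continuous_on linear_conv_bounded_linear)
  have hL: "homeomorphism UNIV UNIV L L'"
  proof -
    have "surj L" by (metis LL' surjI)
    moreover have "surj L'" by (metis LL surjI)
    ultimately show ?thesis unfolding homeomorphism_def using cL LL LL' by simp
  qed
  have hL': "homeomorphism UNIV UNIV L' L" using homeomorphism_symD[OF hL] .
  have pw: "\<And>k. (L \<circ> g \<circ> L') ^^ k = L \<circ> (g ^^ k) \<circ> L'" using conj_pow LL LL' by blast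
  have 1: "(L \<circ> g \<circ> L') ^^ p = id" using gb LL' by (simp add: pw good_base_def fun_eq_iff)
  have 2: "\<exists>h. RH ((L \<circ> g \<circ> L') ^^ k) h" for k
  proof -
    have "\<exists>h. RH (g ^^ k) h" using gb unfolding good_base_def by simp
    then obtain h where hh: "RH (g ^^ k) h" by blast
    have h1: "homeomorphism UNIV UNIV (g ^^ k) h" and ph: "pos_hom (g ^^ k)" using hh unfolding RH_def by auto
    have "homeomorphism UNIV UNIV (L \<circ> (g ^^ k)) (h \<circ> L')"
      by (rule homeomorphism_compose[OF h1 hL])
    then have "homeomorphism UNIV UNIV ((L \<circ> (g ^^ k)) \<circ> L') (L \<circ> (h \<circ> L'))"
      by (rule homeomorphism_compose[OF hL'])
    moreover have "pos_hom ((L \<circ> (g ^^ k)) \<circ> L')"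
      using ph lL lL' unfolding pos_hom_def by (simp add: linear_scale)
    ultimately have "RH ((L \<circ> (g ^^ k)) \<circ> L') (L \<circ> (h \<circ> L'))" by (simp add: RH_def)
    then show ?thesis unfolding pw by blast
  qed
  have 3: "((L \<circ> g \<circ> L') ^^ k) x \<noteq> x" if "0 < k" "k < p" "x \<noteq> 0" for k x
  proof
    assume "((L \<circ> g \<circ> L') ^^ k) x = x"
    then have "L ((g ^^ k) (L' x)) = L (L' x)" by (simp add: pw LL')
    then have "L' (L ((g ^^ k) (L' x))) = L' (L (L' x))" by simp
    then have "(g ^^ k) (L' x) = L' x" by (simp only: LL)
    moreover have "L' x \<noteq> 0"
    proof
      assume "L' x = 0" then have "L (L' x) = 0" using lL by (simp add: linear_0)
      then show False using LL' \<open>x \<noteq> 0\<close> by simp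
    qed
    moreover have "\<forall>x. x \<noteq> 0 \<longrightarrow> (g ^^ k) x \<noteq> x" using gb that unfolding good_base_def by simp
    ultimately show False by simp
  qed
  have 4: "\<forall>k. 0 < k \<and> k < p \<longrightarrow> (\<forall>x. x \<noteq> 0 \<longrightarrow> ((L \<circ> g \<circ> L') ^^ k) x \<noteq> x)"
    using 3 by blast
  have 5: "\<forall>k. \<exists>h. RH ((L \<circ> g \<circ> L') ^^ k) h" using 2 by blast
  show ?thesis unfolding good_base_def using 1 5 4 by (rule conjI[OF _ conjI])
qed


lemma core_transfer:
  fixes L :: "'a::euclidean_space \<Rightarrow> 'b::euclidean_space" and Y :: "'b set"
  assumes lL: "linear L" and lL': "linear L'"
    and LL: "\<And>x. L' (L x) = x" and LL': "\<And>y. L (L' y) = y"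
    and core: "\<And>Y::'a set. finite Y \<Longrightarrow> card Y = p \<Longrightarrow> 0 \<notin> Y \<Longrightarrow> inj_on sgn Y \<Longrightarrow>
                 \<exists>g y0. good_base p g \<and> y0 \<in> Y \<and> {(g ^^ k) y0 | k. k < p} = Y"
    and fin: "finite Y" and cY: "card Y = p" and Y0: "0 \<notin> Y" and inj: "inj_on sgn Y"
  shows "\<exists>g y0. good_base p g \<and> y0 \<in> Y \<and> {(g ^^ k) y0 | k. k < p} = Y"
proof -
  define Y' where "Y' = L' ` Y"
  have iL': "inj_on L' Y" by (metis LL' inj_on_inverseI)
  have L0: "L 0 = 0" "L' 0 = 0" using lL lL' by (simp_all add: linear_0)
  have f': "finite Y'" unfolding Y'_def using fin by simp
  have c': "card Y' = p" unfolding Y'_def using card_image[OF iL'] cY by simp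
  have z': "0 \<notin> Y'"
  proof
    assume "0 \<in> Y'"
    then obtain y where "y \<in> Y" "L' y = 0" unfolding Y'_def by auto
    then have "y = 0" using LL' L0 by metis
    then show False using Y0 \<open>y \<in> Y\<close> by simp
  qed
  have i': "inj_on sgn Y'"
  proof
    fix a b assume a: "a \<in> Y'" and b: "b \<in> Y'" and ab: "sgn a = sgn b"
    obtain y1 where y1: "y1 \<in> Y" "a = L' y1" using a unfolding Y'_def by auto
    obtain y2 where y2: "y2 \<in> Y" "b = L' y2" using b unfolding Y'_def by auto
    have a0: "a \<noteq> 0" and b0: "b \<noteq> 0" using a b z' by auto
    define c where "c = norm a / norm b"
    have cpos: "c > 0" unfolding c_def using a0 b0 by simp
    have "a = norm a *\<^sub>R sgn a" using a0 by (simp add: sgn_div_norm)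
    also have "\<dots> = norm a *\<^sub>R sgn b" using ab by simp
    also have "\<dots> = c *\<^sub>R b" unfolding c_def by (simp add: sgn_div_norm divide_inverse)
    finally have "a = c *\<^sub>R b" .
    then have "L a = c *\<^sub>R L b" using lL by (simp add: linear_scale)
    then have "y1 = c *\<^sub>R y2" using y1 y2 LL' by simp
    then have "sgn y1 = sgn y2" using cpos by (simp add: sgn_pos_scale)
    then have "y1 = y2" using inj y1 y2 unfolding inj_on_def by blast
    then show "a = b" using y1 y2 by simp
  qed
  obtain g y0 where g: "good_base p g" "y0 \<in> Y'" "{(g ^^ k) y0 | k. k < p} = Y'"
    using core[OF f' c' z' i'] by blast
  have gb: "good_base p (L \<circ> g \<circ> L')" by (rule good_base_transfer[OF g(1) lL lL' LL LL'])
  have pw: "\<And>k. (L \<circ> g \<circ> L') ^^ k = L \<circ> (g ^^ k) \<circ> L'" using conj_pow LL LL' by blast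
  have orb: "{((L \<circ> g \<circ> L') ^^ k) (L y0) | k. k < p} = L ` {(g ^^ k) y0 | k. k < p}"
    unfolding pw by (auto simp: LL)
  also have "\<dots> = L ` Y'" using g(3) by simp
  also have "\<dots> = Y" unfolding Y'_def by (force simp: image_image LL')
  finally have orbY: "{((L \<circ> g \<circ> L') ^^ k) (L y0) | k. k < p} = Y" .
  have "L y0 \<in> Y" using g(2) unfolding Y'_def by (auto simp: LL')
  then show ?thesis using gb orbY by blast
qed

lemma core_rot:
  fixes Y :: "(real^'n) set"
  assumes cd: "CARD('n) = 2 * d" and dim: "3 \<le> CARD('n)" and p0: "p > 0"
    and fin: "finite Y" and cY: "card Y = p" and Y0: "0 \<notin> Y" and inj: "inj_on sgn Y"
  shows "\<exists>g y0. good_base p g \<and> y0 \<in> Y \<and> {(g ^^ k) y0 | k. k < p} = Y"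
proof -
  obtain \<pi> :: "'n \<Rightarrow> 'n" and \<sigma> :: "'n \<Rightarrow> real" where ps: "\<And>i. \<pi> (\<pi> i) = i" "\<And>i. \<pi> i \<noteq> i"
    "\<And>i. \<sigma> i * \<sigma> i = 1" "\<And>i. \<sigma> (\<pi> i) = - \<sigma> i"
    using pairing_exists[OF cd] by metis
  interpret pairing \<pi> \<sigma> using ps by (unfold_locales) blast+
  define R where "R = rot \<pi> \<sigma> (2 * pi / real p)"
  have gb: "good_base p R" unfolding R_def by (rule good_base_rot[OF p0])
  define u :: "real^'n" where "u = axis undefined 1"
  have u0: "u \<noteq> 0" unfolding u_def by (simp add: axis_eq_0_iff)
  have un: "norm ((R ^^ k) u) = 1" for k unfolding R_def rot_pow u_def by (rule rot_axis_norm)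
  have ia: "inj_on (\<lambda>k. (R ^^ k) u) {..<p}" by (rule orbit_inj[OF gb u0])
  have "card {..<p} = card (sgn ` Y)" using card_image[OF inj] cY by simp
  moreover have "finite (sgn ` Y)" using fin by simp
  ultimately obtain b where b: "bij_betw b {..<p} (sgn ` Y)"
    using finite_same_card_bij[of "{..<p}" "sgn ` Y"] by blast
  have bs: "b k \<in> sphere 0 1" if "k < p" for k
  proof -
    have "b k \<in> sgn ` Y" using b that unfolding bij_betw_def by auto
    then show ?thesis using Y0 by (auto simp: norm_sgn)
  qed
  have ib: "inj_on b {..<p}" using b unfolding bij_betw_def by simp
  have dim': "3 \<le> DIM(real^'n)" using dim by simp
  have ab: "\<And>k. k < p \<Longrightarrow> (R ^^ k) u \<in> sphere 0 1 \<and> b k \<in> sphere 0 1" using un bs by simp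
  obtain H H' where H: "homeomorphism (sphere 0 1) (sphere 0 1) H H'"
    and Hab: "\<And>k. k < p \<Longrightarrow> H ((R ^^ k) u) = b k"
    using sphere_moving[where a="\<lambda>k. (R ^^ k) u" and p=p and b=b, OF dim' ab ia ib] by blast
  show ?thesis
  proof (rule core_from_sphere[OF gb H _ _ fin Y0 inj p0])
    show "\<And>k. k < p \<Longrightarrow> norm ((R ^^ k) u) = 1" using un by simp
    have "(\<lambda>k. H ((R ^^ k) u)) ` {..<p} = b ` {..<p}" using Hab by (intro image_cong) auto
    also have "\<dots> = sgn ` Y" using b unfolding bij_betw_def by simp
    finally show "(\<lambda>k. H ((R ^^ k) u)) ` {..<p} = sgn ` Y" .
  qed
qed

theorem lemma4p1:
  fixes d :: nat and \<gamma> :: "complex \<Rightarrow> real^'n" and \<epsilon> :: real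
  assumes "d \<ge> 1" and "CARD('n) = 2 * d"
    and "closed_convex_curve \<gamma>"
    and "0 \<in> interior (convex hull (\<gamma> ` S1))"
    and "\<epsilon> > 0"
  shows "\<exists>p::nat. prime p \<and> (\<exists>(x :: nat \<Rightarrow> real^'n) g.
           (\<forall>i\<in>{1..p}. x i \<in> \<gamma> ` S1) \<and>
           Zp_ray_action p g \<and>
           x ` {1..p} = {(g ^^ k) (x 1) | k. k < p} \<and>
           (\<forall>y\<in>\<gamma> ` S1. \<exists>i\<in>{1..p}. dist y (x i) \<le> \<epsilon>))"
proof -
  have dim: "2 \<le> CARD('n)" using assms(1,2) by simp
  obtain p Y where p: "prime p" and gY: "goodset (\<gamma> ` S1) Y" and cY: "card Y = p"
    and net: "\<forall>y\<in>\<gamma> ` S1. \<exists>x\<in>Y. dist y x \<le> \<epsilon>"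
    using select_points[OF assms(3) assms(5) dim] by blast
  have fin: "finite Y" and YC: "Y \<subseteq> \<gamma> ` S1" and Y0: "0 \<notin> Y" and inj: "inj_on sgn Y"
    using gY unfolding goodset_def by auto
  have p0: "p > 0" using p prime_gt_0_nat by blast
  have core: "\<exists>g y0. good_base p g \<and> y0 \<in> Y \<and> {(g ^^ k) y0 | k. k < p} = Y"
  proof (cases "d = 1")
    case True
    have "DIM(complex) = DIM(real^'n)" using True assms(2) by simp
    then obtain L :: "complex \<Rightarrow> real^'n" and L' where L: "linear L" "linear L'"
      "\<And>x. L' (L x) = x" "\<And>y. L (L' y) = y"
      using isomorphisms_UNIV_UNIV by metis
    show ?thesis
    proof (rule core_transfer[OF L(1,2) L(3,4) _ fin cY Y0 inj])
      fix Z :: "complex set"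
      assume "finite Z" "card Z = p" "0 \<notin> Z" "inj_on sgn Z"
      then show "\<exists>g y0. good_base p g \<and> y0 \<in> Z \<and> {(g ^^ k) y0 | k. k < p} = Z"
        using core_complex[OF p0] by blast
    qed
  next
    case False
    then have "3 \<le> CARD('n)" using assms(1,2) by simp
    then show ?thesis using core_rot[OF assms(2) _ p0 fin cY Y0 inj] by blast
  qed
  then obtain g y0 where g: "good_base p g" "y0 \<in> Y" "{(g ^^ k) y0 | k. k < p} = Y" by blast
  define x where "x = (\<lambda>i. (g ^^ (i - 1)) y0)"
  have x1: "x 1 = y0" unfolding x_def by simp
  have ximg: "x ` {1..p} = {(g ^^ k) (x 1) | k. k < p}"
  proof
    show "x ` {1..p} \<subseteq> {(g ^^ k) (x 1) | k. k < p}"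
    proof
      fix z assume "z \<in> x ` {1..p}"
      then obtain i where i: "i \<in> {1..p}" "z = x i" by blast
      then have "i - 1 < p" by auto
      then show "z \<in> {(g ^^ k) (x 1) | k. k < p}" using i x1 unfolding x_def by auto
    qed
    show "{(g ^^ k) (x 1) | k. k < p} \<subseteq> x ` {1..p}"
    proof
      fix z assume "z \<in> {(g ^^ k) (x 1) | k. k < p}"
      then obtain k where k: "k < p" "z = (g ^^ k) (x 1)" by blast
      then have "z = x (k + 1)" using x1 unfolding x_def by simp
      moreover have "k + 1 \<in> {1..p}" using k by simp
      ultimately show "z \<in> x ` {1..p}" by blast
    qed
  qed
  have xY: "x ` {1..p} = Y" using ximg x1 g(3) by simp
  have 1: "\<forall>i\<in>{1..p}. x i \<in> \<gamma> ` S1" using xY YC by blast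
  have 2: "Zp_ray_action p g" by (rule good_base_Zp[OF g(1)])
  have 3: "\<forall>y\<in>\<gamma> ` S1. \<exists>i\<in>{1..p}. dist y (x i) \<le> \<epsilon>"
  proof
    fix y assume "y \<in> \<gamma> ` S1"
    then obtain z where z: "z \<in> Y" "dist y z \<le> \<epsilon>" using net by blast
    then obtain i where "i \<in> {1..p}" "z = x i" using xY by blast
    then show "\<exists>i\<in>{1..p}. dist y (x i) \<le> \<epsilon>" using z by blast
  qed
  show ?thesis using p 1 2 ximg 3 by blast
qed

end
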